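(* Let $k \in \mathbb{N}$ with $k > 3$. Then $$\max\left\{1, \left\lceil\frac{k}{4}\right\rceil - 1\right\} \leq q(k) < \begin{cases} \frac{k}{3} & \text{if } k \bmod 3 = 0,\\ \left\lceil\frac{k}{2}\right\rceil & \text{otherwise.}\end{cases}$$
   Context: For a graph $G$ with an edge-colouring $f\colon E(G)\to\{1,\dots,k\}$ and $1\le j\le k$: $e_j[v]$ is the number of edges coloured $j$ in the subgraph induced by the closed neighbourhood $N[v]$ of $v$, and $\deg_j(v)$ is the number of edges coloured $j$ incident to $v$. Given a strictly increasing sequence of positive integers $(a_1,\dots,a_k)$, a $d$-regular graph $G$ with $d=\sum_j a_j$ is an $(a_1,\dots,a_k)$-flip graph if there is an edge-colouring with colours $\{1,\dots,k\}$ such that $\deg_j(v)=a_j$ for all vertices $v$ and all $j$, and $e_k[v]<e_{k-1}[v]<\dots<e_1[v]$ for every vertex $v$; the sequence is then a $k$-flip sequence. For $k\ge 2$, call an index $q\in\{1,\dots,k-1\}$ admissible if there exists $h\in\mathbb{N}$ such that for every $N\in\mathbb{N}$ there is a $k$-flip sequence $(a_1,\dots,a_k)$ with $a_q=h$ and $a_k>N$. $q(k)$ denotes the largest admissible index (the upper bound asserts that every admissible index is below the stated value). *)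

theory Defs
  imports Complex_Main
begin

definition simple_graph :: "nat set \<Rightarrow> nat set set \<Rightarrow> bool" where
  "simple_graph V E \<longleftrightarrow> finite V \<and>
     (\<forall>e\<in>E. \<exists>u v. u \<noteq> v \<and> u \<in> V \<and> v \<in> V \<and> e = {u, v})"

definition closed_nbhd :: "nat set set \<Rightarrow> nat \<Rightarrow> nat set" where
  "closed_nbhd E v = insert v {u. {u, v} \<in> E}"

definition degree :: "nat set set \<Rightarrow> nat \<Rightarrow> nat" where
  "degree E v = card {e\<in>E. v \<in> e}"

definition regular :: "nat set \<Rightarrow> nat set set \<Rightarrow> nat \<Rightarrow> bool" where
  "regular V E d \<longleftrightarrow> (\<forall>v\<in>V. degree E v = d)"

definition col_deg :: "nat set set \<Rightarrow> (nat set \<Rightarrow> nat) \<Rightarrow> nat \<Rightarrow> nat \<Rightarrow> nat" where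
  "col_deg E f j v = card {e\<in>E. v \<in> e \<and> f e = j}"

definition col_nbhd_edges :: "nat set set \<Rightarrow> (nat set \<Rightarrow> nat) \<Rightarrow> nat \<Rightarrow> nat \<Rightarrow> nat" where
  "col_nbhd_edges E f j v = card {e\<in>E. e \<subseteq> closed_nbhd E v \<and> f e = j}"

text \<open>A sequence (a_1,...,a_k) is represented by a function a on indices 1..k.\<close>
definition incr_pos_seq :: "nat \<Rightarrow> (nat \<Rightarrow> nat) \<Rightarrow> bool" where
  "incr_pos_seq k a \<longleftrightarrow> (\<forall>j\<in>{1..k}. 0 < a j) \<and> (\<forall>j\<in>{1..<k}. a j < a (Suc j))"

definition flip_graph :: "nat \<Rightarrow> (nat \<Rightarrow> nat) \<Rightarrow> nat set \<Rightarrow> nat set set \<Rightarrow> bool" where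
  "flip_graph k a V E \<longleftrightarrow> incr_pos_seq k a \<and> simple_graph V E \<and> V \<noteq> {} \<and>
     regular V E (\<Sum>j=1..k. a j) \<and>
     (\<exists>f. (\<forall>e\<in>E. f e \<in> {1..k}) \<and>
          (\<forall>v\<in>V. \<forall>j\<in>{1..k}. col_deg E f j v = a j) \<and>
          (\<forall>v\<in>V. \<forall>j\<in>{1..<k}. col_nbhd_edges E f (Suc j) v < col_nbhd_edges E f j v))"

definition flip_seq :: "nat \<Rightarrow> (nat \<Rightarrow> nat) \<Rightarrow> bool" where
  "flip_seq k a \<longleftrightarrow> (\<exists>V E. flip_graph k a V E)"

definition admissible :: "nat \<Rightarrow> nat \<Rightarrow> bool" where
  "admissible k q \<longleftrightarrow> 1 \<le> q \<and> q \<le> k - 1 \<and>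
     (\<exists>h::nat. \<forall>N::nat. \<exists>a. flip_seq k a \<and> a q = h \<and> a k > N)"

definition q_max :: "nat \<Rightarrow> nat" where
  "q_max k = Max {q. admissible k q}"

end

theory Submission
  imports Defs "HOL-Library.Countable" "HOL-Library.Nat_Bijection"
begin


definition nb :: "nat set set \<Rightarrow> nat \<Rightarrow> nat set" where
  "nb E v = {u. {u, v} \<in> E}"

definition cin :: "nat set set \<Rightarrow> (nat set \<Rightarrow> nat) \<Rightarrow> nat \<Rightarrow> nat \<Rightarrow> nat" where
  "cin E f j v = card {e\<in>E. e \<subseteq> nb E v \<and> f e = j}"

lemma sg_edge: "simple_graph V E \<Longrightarrow> e \<in> E \<Longrightarrow> \<exists>u w. u \<noteq> w \<and> u \<in> V \<and> w \<in> V \<and> e = {u, w}"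
  unfolding simple_graph_def by blast

lemma sg_finE: "simple_graph V E \<Longrightarrow> finite E"
proof -
  assume s: "simple_graph V E"
  have "E \<subseteq> Pow V" using sg_edge[OF s] by blast
  moreover have "finite V" using s simple_graph_def by blast
  ultimately show ?thesis by (meson finite_Pow_iff finite_subset)
qed

lemma sg_noloop: "simple_graph V E \<Longrightarrow> {v} \<notin> E"
proof
  assume s: "simple_graph V E" and v: "{v} \<in> E"
  obtain u w where "u \<noteq> w" "{v} = {u, w}" using sg_edge[OF s v] by blast
  then show False by (metis insert_absorb insert_iff singleton_insert_inj_eq)
qed

lemma nbhd_split:
  assumes s: "simple_graph V E"
  shows "col_nbhd_edges E f j v = col_deg E f j v + cin E f j v"
proof -
  have fin: "finite E" using sg_finE[OF s] .
  have vn: "v \<notin> nb E v" using sg_noloop[OF s] unfolding nb_def by auto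
  have eq: "{e\<in>E. e \<subseteq> closed_nbhd E v \<and> f e = j} =
        {e\<in>E. v \<in> e \<and> f e = j} \<union> {e\<in>E. e \<subseteq> nb E v \<and> f e = j}"
  proof (rule set_eqI, rule iffI)
    fix e assume e: "e \<in> {e\<in>E. e \<subseteq> closed_nbhd E v \<and> f e = j}"
    show "e \<in> {e\<in>E. v \<in> e \<and> f e = j} \<union> {e\<in>E. e \<subseteq> nb E v \<and> f e = j}"
    proof (cases "v \<in> e")
      case True then show ?thesis using e by auto
    next
      case False
      have "e \<subseteq> nb E v" using e False unfolding closed_nbhd_def nb_def by auto
      then show ?thesis using e by auto
    qed
  next
    fix e assume e: "e \<in> {e\<in>E. v \<in> e \<and> f e = j} \<union> {e\<in>E. e \<subseteq> nb E v \<and> f e = j}"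
    show "e \<in> {e\<in>E. e \<subseteq> closed_nbhd E v \<and> f e = j}"
    proof (cases "v \<in> e")
      case True
      obtain x y where xy: "x \<noteq> y" "e = {x, y}" using sg_edge[OF s] e by blast
      have "e \<in> E" using e by auto
      then have "e \<subseteq> closed_nbhd E v" using True xy unfolding closed_nbhd_def
        by (auto simp: insert_commute)
      then show ?thesis using e by auto
    next
      case False
      then show ?thesis using e unfolding closed_nbhd_def nb_def by auto
    qed
  qed
  have disj: "{e\<in>E. v \<in> e \<and> f e = j} \<inter> {e\<in>E. e \<subseteq> nb E v \<and> f e = j} = {}"
    using vn by auto
  show ?thesis unfolding col_nbhd_edges_def col_deg_def cin_def eq
    by (rule card_Un_disjoint) (use fin disj in auto)
qed

lemma sum_card_filter:
  assumes "finite A" "finite J"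
  shows "(\<Sum>j\<in>J. card {e\<in>A. f e = j}) = card {e\<in>A. f e \<in> J}"
proof -
  have "{e\<in>A. f e \<in> J} = (\<Union>j\<in>J. {e\<in>A. f e = j})" by auto
  moreover have "card (\<Union>j\<in>J. {e\<in>A. f e = j}) = (\<Sum>j\<in>J. card {e\<in>A. f e = j})"
    by (rule card_UN_disjoint) (use assms in auto)
  ultimately show ?thesis by simp
qed

lemma incr_mono:
  assumes "incr_pos_seq k a" "1 \<le> i" "i \<le> j" "j \<le> k"
  shows "a i \<le> a j"
  using assms(3,4)
proof (induction j)
  case 0 then show ?case by simp
next
  case (Suc j)
  show ?case
  proof (cases "i = Suc j")
    case True then show ?thesis by simp
  next
    case False
    then have "i \<le> j" using Suc by simp
    then have "a i \<le> a j" using Suc by simp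
    moreover have "a j < a (Suc j)" using assms(1) Suc.prems \<open>i \<le> j\<close> assms(2)
      unfolding incr_pos_seq_def by auto
    ultimately show ?thesis by simp
  qed
qed

lemma chain:
  assumes "\<forall>j\<in>{1..<k}. C (Suc j) + A (Suc j) < C j + (A j :: int)"
    and "1 \<le> j" "j \<le> i" "i \<le> k"
  shows "C i + A i + int (i - j) \<le> C j + A j"
  using assms(3,4)
proof (induction i)
  case 0 then show ?case by simp
next
  case (Suc i)
  show ?case
  proof (cases "j = Suc i")
    case True then show ?thesis by simp
  next
    case False
    then have ji: "j \<le> i" using Suc by simp
    then have "C i + A i + int (i - j) \<le> C j + A j" using Suc by simp
    moreover have "C (Suc i) + A (Suc i) < C i + A i" using assms(1) Suc.prems ji assms(2) by auto
    ultimately show ?thesis using ji by (simp add: Suc_diff_le)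
  qed
qed

lemma pervertex:
  fixes C A :: "nat \<Rightarrow> int"
  assumes ch: "\<forall>j\<in>{1..<k}. C (Suc j) + A (Suc j) < C j + A j"
  and mono: "\<And>i j. 1 \<le> i \<Longrightarrow> i \<le> j \<Longrightarrow> j \<le> k \<Longrightarrow> A i \<le> A j"
  and C0: "\<And>i. 0 \<le> C i" and A0: "\<And>i. 0 \<le> A i"
  and q: "1 \<le> q" "q < k" "k \<le> 3*q"
  shows "(\<Sum>i\<in>{q+1..k}. C i) \<le> 2 * (\<Sum>j\<in>{1..q}. C j) + 2 * A q - A k"
proof -
  define X where "X = C (q+1)"
  define B where "B = A (q+1) - A q"
  have B0: "0 \<le> B" unfolding B_def using mono[of q "q+1"] q by simp
  have a: "X + B \<le> C j" if "j \<in> {1..q}" for j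
  proof -
    have "C (q+1) + A (q+1) + int (q+1 - j) \<le> C j + A j"
      using chain[OF ch, of j "q+1"] that q by auto
    moreover have "A j \<le> A q" using mono[of j q] that q by auto
    ultimately show ?thesis unfolding X_def B_def by simp
  qed
  have sa: "(\<Sum>j\<in>{1..q}. X + B) \<le> (\<Sum>j\<in>{1..q}. C j)"
    by (rule sum_mono) (use a in auto)
  hence sa': "int q * (X + B) \<le> (\<Sum>j\<in>{1..q}. C j)" by simp
  have b: "C i \<le> X" if "i \<in> {q+1..k}" for i
  proof -
    have "C i + A i + int (i - (q+1)) \<le> C (q+1) + A (q+1)"
      using chain[OF ch, of "q+1" i] that q by auto
    moreover have "A (q+1) \<le> A i" using mono[of "q+1" i] that q by auto
    ultimately show ?thesis unfolding X_def by simp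
  qed
  have c: "C k \<le> X + A (q+1) - A k"
  proof -
    have "C k + A k + int (k - (q+1)) \<le> C (q+1) + A (q+1)"
      using chain[OF ch, of "q+1" k] q by auto
    thus ?thesis unfolding X_def by simp
  qed
  have kin: "k \<in> {q+1..k}" using q by auto
  have "(\<Sum>i\<in>{q+1..k}. C i) = C k + (\<Sum>i\<in>{q+1..k}-{k}. C i)"
    by (rule sum.remove[OF _ kin]) simp
  also have "(\<Sum>i\<in>{q+1..k}-{k}. C i) \<le> (\<Sum>i\<in>{q+1..k}-{k}. X)"
    by (rule sum_mono) (use b in auto)
  also have "(\<Sum>i\<in>{q+1..k}-{k}. X) = int (k - q - 1) * X"
    using kin by (simp add: card_Diff_singleton)
  finally have s1: "(\<Sum>i\<in>{q+1..k}. C i) \<le> X + A (q+1) - A k + int (k - q - 1) * X"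
    using c by linarith
  have X0: "0 \<le> X" unfolding X_def using C0 by simp
  have "int (k - q - 1) * X + X = int (k - q) * X" using q by (simp add: algebra_simps of_nat_diff)
  also have "\<dots> \<le> int (2*q) * X" using q X0 by (intro mult_right_mono) auto
  finally have s2: "int (k - q - 1) * X + X \<le> 2 * (int q * X)" by simp
  have s3: "int q * B \<ge> B" using q B0 by (metis mult_le_cancel_right1 of_nat_le_iff of_nat_1 order.strict_iff_not)
  have "int q * (X + B) = int q * X + int q * B" by (simp add: algebra_simps)
  hence sa'': "int q * X + int q * B \<le> (\<Sum>j\<in>{1..q}. C j)" using sa' by simp
  have Bd: "B = A (q+1) - A q" unfolding B_def ..
  show ?thesis using s1 s2 s3 sa'' Bd A0[of "q+1"] by linarith
qed

lemma edge_other: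
  assumes s: "simple_graph V E" and e: "e \<in> E" and y: "y \<in> e"
  shows "\<exists>z. z \<noteq> y \<and> e = {y, z} \<and> y \<in> V \<and> z \<in> V"
proof -
  obtain x w where "x \<noteq> w" "x \<in> V" "w \<in> V" "e = {x, w}" using sg_edge[OF s e] by blast
  then show ?thesis using y by (auto simp: insert_commute)
qed

lemma comb_bound:
  assumes s: "simple_graph V E"
  and fE: "\<forall>e\<in>E. f e \<in> {1..k}"
  and deg: "\<forall>v\<in>V. \<forall>j\<in>{1..k}. col_deg E f j v = a j"
  and q: "q < k"
  shows "2 * (\<Sum>v\<in>V. card {e\<in>E. e \<subseteq> nb E v \<and> f e \<in> {1..q}})
     \<le> (\<Sum>v\<in>V. card {e\<in>E. e \<subseteq> nb E v \<and> f e \<in> {q+1..k}}) + 2 * card V * (\<Sum>j=1..q. a j)^2"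
proof -
  define sm where "sm = (\<Sum>j=1..q. a j)"
  have finV: "finite V" using s simple_graph_def by blast
  have finE: "finite E" using sg_finE[OF s] .
  have Esym: "{x, y} \<in> E \<longleftrightarrow> {y, x} \<in> E" for x y by (simp add: insert_commute)
  have EV: "x \<in> V" if "{x, y} \<in> E" for x y using edge_other[OF s that] by auto
  define SmN where "SmN v = {u. {v,u} \<in> E \<and> f {v,u} \<in> {1..q}}" for v
  have finSmN: "finite (SmN v)" for v
    by (rule finite_subset[OF _ finV]) (auto simp: SmN_def Esym intro: EV)
  have cardSmN: "card (SmN v) = sm" if v: "v \<in> V" for v
  proof -
    have img: "{e\<in>E. v \<in> e \<and> f e \<in> {1..q}} = (\<lambda>u. {v,u}) ` SmN v"
    proof (rule set_eqI, rule iffI)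
      fix e assume e: "e \<in> {e\<in>E. v \<in> e \<and> f e \<in> {1..q}}"
      then obtain z where "e = {v, z}" using edge_other[OF s, of e v] by auto
      then show "e \<in> (\<lambda>u. {v,u}) ` SmN v" using e unfolding SmN_def by auto
    next
      fix e assume "e \<in> (\<lambda>u. {v,u}) ` SmN v"
      then show "e \<in> {e\<in>E. v \<in> e \<and> f e \<in> {1..q}}" unfolding SmN_def by auto
    qed
    have inj: "inj_on (\<lambda>u. {v,u}) (SmN v)"
      by (rule inj_onI) (metis doubleton_eq_iff)
    have "card {e\<in>E. v \<in> e \<and> f e \<in> {1..q}} = (\<Sum>j=1..q. card {e\<in>{e\<in>E. v \<in> e}. f e = j})"
      using sum_card_filter[of "{e\<in>E. v \<in> e}" "{1..q}" f] finE by simp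
    also have "\<dots> = (\<Sum>j=1..q. a j)"
      by (rule sum.cong) (use deg v q in \<open>auto simp: col_deg_def\<close>)
    finally show ?thesis using img card_image[OF inj] unfolding sm_def by simp
  qed
  define PA where "PA v = {e\<in>E. e \<subseteq> nb E v \<and> f e \<in> {1..q} \<and> (\<forall>u\<in>e. f {v,u} \<notin> {1..q})}" for v
  define PB where "PB v = {e\<in>E. e \<subseteq> nb E v \<and> f e \<in> {1..q} \<and> (\<exists>u\<in>e. f {v,u} \<in> {1..q})}" for v
  define Qs where "Qs v = {e\<in>E. e \<subseteq> nb E v \<and> f e \<in> {q+1..k}}" for v
  have split: "card {e\<in>E. e \<subseteq> nb E v \<and> f e \<in> {1..q}} = card (PA v) + card (PB v)" for v
  proof -
    have "{e\<in>E. e \<subseteq> nb E v \<and> f e \<in> {1..q}} = PA v \<union> PB v" unfolding PA_def PB_def by auto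
    moreover have "PA v \<inter> PB v = {}" unfolding PA_def PB_def by auto
    moreover have "finite (PA v)" "finite (PB v)" unfolding PA_def PB_def using finE by auto
    ultimately show ?thesis by (simp add: card_Un_disjoint)
  qed
  have PB_le: "card (PB v) \<le> sm * sm" if v: "v \<in> V" for v
  proof -
    have sub: "PB v \<subseteq> (\<Union>y\<in>SmN v. (\<lambda>z. {y,z}) ` SmN y)"
    proof
      fix e assume e: "e \<in> PB v"
      then obtain u where u: "u \<in> e" "f {v,u} \<in> {1..q}" unfolding PB_def by auto
      have eE: "e \<in> E" using e unfolding PB_def by auto
      obtain z where z: "e = {u, z}" using edge_other[OF s eE u(1)] by auto
      have "u \<in> nb E v" using e u unfolding PB_def by auto
      hence "{v,u} \<in> E" unfolding nb_def using Esym by auto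
      hence uS: "u \<in> SmN v" using u unfolding SmN_def by auto
      have "z \<in> SmN u" using e z eE unfolding SmN_def PB_def by auto
      then show "e \<in> (\<Union>y\<in>SmN v. (\<lambda>z. {y,z}) ` SmN y)" using uS z by auto
    qed
    have "card (PB v) \<le> card (\<Union>y\<in>SmN v. (\<lambda>z. {y,z}) ` SmN y)"
      by (rule card_mono[OF _ sub]) (use finSmN in auto)
    also have "\<dots> \<le> (\<Sum>y\<in>SmN v. card ((\<lambda>z. {y,z}) ` SmN y))"
      by (rule card_UN_le[OF finSmN])
    also have "\<dots> \<le> (\<Sum>y\<in>SmN v. card (SmN y))"
      by (rule sum_mono) (rule card_image_le[OF finSmN])
    also have "\<dots> = (\<Sum>y\<in>SmN v. sm)"
    proof (rule sum.cong)
      fix y assume "y \<in> SmN v"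
      then have "y \<in> V" unfolding SmN_def using Esym EV by blast
      then show "card (SmN y) = sm" using cardSmN by simp
    qed simp
    also have "\<dots> = sm * sm" using cardSmN[OF v] by simp
    finally show ?thesis .
  qed
  define PAS where "PAS = Sigma V PA"
  define QBS where "QBS = Sigma V Qs"
  define Phi where "Phi p = (\<lambda>y. (y, insert (fst p) (snd p - {y}))) ` (snd p)" for p :: "nat \<times> nat set"
  have finPA: "finite (PA v)" for v unfolding PA_def using finE by auto
  have finQs: "finite (Qs v)" for v unfolding Qs_def using finE by auto
  have cPAS: "card PAS = (\<Sum>v\<in>V. card (PA v))" unfolding PAS_def
    using finPA by (subst card_SigmaI[OF finV]) auto
  have cQBS: "card QBS = (\<Sum>v\<in>V. card (Qs v))" unfolding QBS_def
    using finQs by (subst card_SigmaI[OF finV]) auto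
  have finQBS: "finite QBS" unfolding QBS_def using finV finQs by auto
  have finPAS: "finite PAS" unfolding PAS_def using finV finPA by auto
  have Phi_sub: "Phi p \<subseteq> QBS" if p: "p \<in> PAS" for p
  proof
    fix x assume x: "x \<in> Phi p"
    obtain v e where pe: "p = (v, e)" by fastforce
    have v: "v \<in> V" and e: "e \<in> PA v" using p pe unfolding PAS_def by auto
    have eE: "e \<in> E" using e unfolding PA_def by auto
    obtain y where y: "y \<in> e" "x = (y, insert v (e - {y}))" using x pe unfolding Phi_def by auto
    obtain z where z: "z \<noteq> y" "e = {y, z}" "y \<in> V" using edge_other[OF s eE y(1)] by auto
    have xe: "x = (y, {v, z})" using y z by auto
    have zn: "z \<in> nb E v" and yn: "y \<in> nb E v" using e z unfolding PA_def by auto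
    have vz: "{v, z} \<in> E" using zn unfolding nb_def using Esym by auto
    have "{v, z} \<subseteq> nb E y" using yn eE z unfolding nb_def by (auto simp: insert_commute)
    moreover have "f {v, z} \<in> {q+1..k}"
    proof -
      have "f {v,z} \<notin> {1..q}" using e z unfolding PA_def by auto
      moreover have "f {v,z} \<in> {1..k}" using fE vz by auto
      ultimately show ?thesis by auto
    qed
    ultimately show "x \<in> QBS" unfolding QBS_def Qs_def xe using vz z by auto
  qed
  have Phi_card: "card (Phi p) = 2" if p: "p \<in> PAS" for p
  proof -
    obtain v e where pe: "p = (v, e)" by fastforce
    have "e \<in> E" using p pe unfolding PAS_def PA_def by auto
    then obtain x w where xw: "x \<noteq> w" "e = {x, w}" using sg_edge[OF s] by blast
    have "inj_on (\<lambda>y. (y, insert v (e - {y}))) e" by (rule inj_onI) auto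
    then have "card (Phi p) = card e" unfolding Phi_def pe by (simp add: card_image)
    then show ?thesis using xw by simp
  qed
  have Phi_disj: "Phi p \<inter> Phi p' = {}" if p: "p \<in> PAS" and p': "p' \<in> PAS" and ne: "p \<noteq> p'" for p p'
  proof (rule ccontr)
    assume "Phi p \<inter> Phi p' \<noteq> {}"
    then obtain x where x: "x \<in> Phi p" "x \<in> Phi p'" by blast
    obtain v e where pe: "p = (v, e)" by fastforce
    obtain v' e' where pe': "p' = (v', e')" by fastforce
    have e: "e \<in> PA v" and e': "e' \<in> PA v'" using p p' pe pe' unfolding PAS_def by auto
    have eE: "e \<in> E" and eE': "e' \<in> E" using e e' unfolding PA_def by auto
    obtain y where y: "y \<in> e" "x = (y, insert v (e - {y}))" using x pe unfolding Phi_def by auto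
    obtain y' where y': "y' \<in> e'" "x = (y', insert v' (e' - {y'}))" using x pe' unfolding Phi_def by auto
    have yy: "y' = y" using y y' by auto
    obtain z where z: "z \<noteq> y" "e = {y, z}" using edge_other[OF s eE y(1)] by auto
    obtain z' where z': "z' \<noteq> y" "e' = {y, z'}" using edge_other[OF s eE' y'(1)] yy by auto
    have "{v, z} = {v', z'}" using y y' yy z z' by (auto simp: insert_Diff_if)
    then have "(v = v' \<and> z = z') \<or> (v = z' \<and> z = v')" by (metis doubleton_eq_iff)
    then show False
    proof
      assume "v = v' \<and> z = z'"
      then show False using ne pe pe' z z' by auto
    next
      assume vz: "v = z' \<and> z = v'"
      have "f e' \<in> {1..q}" using e' unfolding PA_def by auto
      moreover have "f {v, y} \<notin> {1..q}" using e y unfolding PA_def by auto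
      ultimately show False using z' vz by (simp add: insert_commute)
    qed
  qed
  have "card (\<Union>p\<in>PAS. Phi p) = (\<Sum>p\<in>PAS. card (Phi p))"
  proof (rule card_UN_disjoint[OF finPAS])
    show "\<forall>p\<in>PAS. finite (Phi p)" using Phi_sub finQBS by (meson finite_subset)
    show "\<forall>p\<in>PAS. \<forall>p'\<in>PAS. p \<noteq> p' \<longrightarrow> Phi p \<inter> Phi p' = {}" using Phi_disj by blast
  qed
  also have "\<dots> = 2 * card PAS" using Phi_card by simp
  finally have "2 * card PAS \<le> card QBS"
    by (metis UN_least Phi_sub card_mono finQBS)
  hence A: "2 * (\<Sum>v\<in>V. card (PA v)) \<le> (\<Sum>v\<in>V. card (Qs v))" using cPAS cQBS by simp
  have B: "(\<Sum>v\<in>V. card (PB v)) \<le> card V * (sm * sm)"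
    using sum_mono[of V "\<lambda>v. card (PB v)" "\<lambda>v. sm * sm"] PB_le by simp
  have "2 * (\<Sum>v\<in>V. card {e\<in>E. e \<subseteq> nb E v \<and> f e \<in> {1..q}})
      = 2 * (\<Sum>v\<in>V. card (PA v)) + 2 * (\<Sum>v\<in>V. card (PB v))"
    unfolding split by (simp add: sum.distrib)
  also have "\<dots> \<le> (\<Sum>v\<in>V. card (Qs v)) + 2 * (card V * (sm * sm))" using A B by linarith
  finally show ?thesis unfolding Qs_def sm_def by (simp add: power2_eq_square)
qed

lemma bound_ak:
  assumes fg: "flip_graph k a V E" and q: "1 \<le> q" "q < k" "k \<le> 3*q"
  shows "int (a k) \<le> 2 * int (a q) + 2 * (int (\<Sum>j=1..q. a j))^2"
proof -
  obtain f where fE: "\<forall>e\<in>E. f e \<in> {1..k}"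
    and deg: "\<forall>v\<in>V. \<forall>j\<in>{1..k}. col_deg E f j v = a j"
    and fl: "\<forall>v\<in>V. \<forall>j\<in>{1..<k}. col_nbhd_edges E f (Suc j) v < col_nbhd_edges E f j v"
    using fg unfolding flip_graph_def by blast
  have s: "simple_graph V E" and Vne: "V \<noteq> {}" and inc: "incr_pos_seq k a"
    using fg unfolding flip_graph_def by auto
  have finV: "finite V" using s simple_graph_def by blast
  have finE: "finite E" using sg_finE[OF s] .
  define P where "P v = card {e\<in>E. e \<subseteq> nb E v \<and> f e \<in> {1..q}}" for v
  define Q where "Q v = card {e\<in>E. e \<subseteq> nb E v \<and> f e \<in> {q+1..k}}" for v
  have sumc: "(\<Sum>i\<in>J. int (cin E f i v)) = int (card {e\<in>E. e \<subseteq> nb E v \<and> f e \<in> J})" if "finite J" for J v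
  proof -
    have "(\<Sum>i\<in>J. cin E f i v) = card {e\<in>{e\<in>E. e \<subseteq> nb E v}. f e \<in> J}"
      unfolding cin_def using sum_card_filter[of "{e\<in>E. e \<subseteq> nb E v}" J f] finE that by simp
    then show ?thesis by (simp del: of_nat_sum add: of_nat_sum[symmetric])
  qed
  have pv: "int (Q v) \<le> 2 * int (P v) + 2 * int (a q) - int (a k)" if v: "v \<in> V" for v
  proof -
    define C where "C i = int (cin E f i v)" for i
    define A where "A i = int (a i)" for i
    have ch: "\<forall>j\<in>{1..<k}. C (Suc j) + A (Suc j) < C j + A j"
    proof
      fix j assume j: "j \<in> {1..<k}"
      have "col_nbhd_edges E f (Suc j) v < col_nbhd_edges E f j v" using fl v j by auto
      then show "C (Suc j) + A (Suc j) < C j + A j"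
        unfolding C_def A_def using nbhd_split[OF s] deg v j by auto
    qed
    have mono: "A i \<le> A j" if "1 \<le> i" "i \<le> j" "j \<le> k" for i j
      unfolding A_def using incr_mono[OF inc that] by simp
    have "(\<Sum>i\<in>{q+1..k}. C i) \<le> 2 * (\<Sum>j\<in>{1..q}. C j) + 2 * A q - A k"
      by (rule pervertex[OF ch mono _ _ q]) (auto simp: C_def A_def)
    then show ?thesis unfolding C_def A_def P_def Q_def using sumc by simp
  qed
  have S1: "(\<Sum>v\<in>V. int (Q v)) \<le> (\<Sum>v\<in>V. 2 * int (P v) + 2 * int (a q) - int (a k))"
    by (rule sum_mono) (use pv in auto)
  have S2: "2 * (\<Sum>v\<in>V. P v) \<le> (\<Sum>v\<in>V. Q v) + 2 * card V * (\<Sum>j=1..q. a j)^2"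
    unfolding P_def Q_def by (rule comb_bound[OF s fE deg q(2)])
  have S2': "2 * (\<Sum>v\<in>V. int (P v)) \<le> (\<Sum>v\<in>V. int (Q v)) + 2 * int (card V) * (int (\<Sum>j=1..q. a j))^2"
    using S2 by (simp del: of_nat_sum add: of_nat_sum[symmetric]) (metis (mono_tags) of_nat_le_iff of_nat_add of_nat_mult of_nat_power of_nat_numeral)
  have S1': "(\<Sum>v\<in>V. int (Q v)) \<le> 2 * (\<Sum>v\<in>V. int (P v)) + int (card V) * (2 * int (a q) - int (a k))"
    using S1 by (simp add: sum.distrib sum_subtractf sum_distrib_left algebra_simps)
  have n0: "0 < int (card V)" using finV Vne by (simp add: card_gt_0_iff)
  have "int (card V) * (int (a k) - 2 * int (a q)) \<le> int (card V) * (2 * (int (\<Sum>j=1..q. a j))^2)"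
    using S1' S2' by (simp add: algebra_simps)
  then have "int (a k) - 2 * int (a q) \<le> 2 * (int (\<Sum>j=1..q. a j))^2"
    using n0 by (simp add: mult_le_cancel_left)
  then show ?thesis by simp
qed

lemma upper: "admissible k q \<Longrightarrow> 3*q < k"
proof (rule ccontr)
  assume ad: "admissible k q" and nk: "\<not> 3*q < k"
  have q: "1 \<le> q" "q \<le> k - 1" using ad unfolding admissible_def by auto
  obtain h where hN: "\<forall>N::nat. \<exists>a. flip_seq k a \<and> a q = h \<and> a k > N"
    using ad unfolding admissible_def by blast
  obtain a where a: "flip_seq k a" "a q = h" "a k > 2*h + 2*(q*h)^2" using hN by blast
  obtain V E where fg: "flip_graph k a V E" using a(1) unfolding flip_seq_def by blast
  have inc: "incr_pos_seq k a" using fg unfolding flip_graph_def by auto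
  have qk: "q < k" using q by (cases k) auto
  have "int (a k) \<le> 2 * int (a q) + 2 * (int (\<Sum>j=1..q. a j))^2"
    by (rule bound_ak[OF fg q(1) qk]) (use nk in auto)
  moreover have "(\<Sum>j=1..q. a j) \<le> (\<Sum>j=1..q. h)"
    by (rule sum_mono) (use incr_mono[OF inc] a(2) qk in auto)
  hence "(\<Sum>j=1..q. a j) \<le> q * h" by simp
  hence "int (\<Sum>j=1..q. a j) \<le> int (q*h)" by (simp only: of_nat_le_iff)
  hence "(int (\<Sum>j=1..q. a j))^2 \<le> (int (q*h))^2" by (intro power_mono) (simp_all only: of_nat_0_le_iff)
  ultimately have "int (a k) \<le> 2 * int h + 2 * (int (q*h))^2" using a(2) by linarith
  then have "a k \<le> 2*h + 2*(q*h)^2" by (metis (mono_tags) of_nat_le_iff of_nat_add of_nat_mult of_nat_power of_nat_numeral)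
  then show False using a(3) by simp
qed




definition gsg :: "'v set \<Rightarrow> 'v set set \<Rightarrow> bool" where
  "gsg V E \<longleftrightarrow> finite V \<and> (\<forall>e\<in>E. \<exists>u v. u \<noteq> v \<and> u \<in> V \<and> v \<in> V \<and> e = {u, v})"
definition gcn :: "'v set set \<Rightarrow> 'v \<Rightarrow> 'v set" where
  "gcn E v = insert v {u. {u, v} \<in> E}"
definition gdg :: "'v set set \<Rightarrow> ('v set \<Rightarrow> nat) \<Rightarrow> nat \<Rightarrow> 'v \<Rightarrow> nat" where
  "gdg E f j v = card {e\<in>E. v \<in> e \<and> f e = j}"
definition gne :: "'v set set \<Rightarrow> ('v set \<Rightarrow> nat) \<Rightarrow> nat \<Rightarrow> 'v \<Rightarrow> nat" where
  "gne E f j v = card {e\<in>E. e \<subseteq> gcn E v \<and> f e = j}"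

lemma card_img_filter:
  assumes "inj_on G (Pow V)" "E \<subseteq> Pow V"
  shows "card {e'\<in>G ` E. Q e'} = card {e\<in>E. Q (G e)}"
proof -
  have "{e'\<in>G ` E. Q e'} = G ` {e\<in>E. Q (G e)}" by auto
  moreover have "inj_on G {e\<in>E. Q (G e)}" using assms by (auto intro: inj_on_subset)
  ultimately show ?thesis by (simp add: card_image)
qed

lemma flip_transfer:
  fixes g :: "'v \<Rightarrow> nat"
  assumes sg: "gsg V E" and ne: "V \<noteq> {}" and inj: "inj_on g V" and inc: "incr_pos_seq k a"
  and dg: "\<forall>v\<in>V. card {e\<in>E. v \<in> e} = (\<Sum>j=1..k. a j)"
  and fE: "\<forall>e\<in>E. f e \<in> {1..k}"
  and cd: "\<forall>v\<in>V. \<forall>j\<in>{1..k}. gdg E f j v = a j"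
  and cn: "\<forall>v\<in>V. \<forall>j\<in>{1..<k}. gne E f (Suc j) v < gne E f j v"
  shows "flip_seq k a"
proof -
  define G where "G = image g"
  define V' where "V' = g ` V"
  define E' where "E' = G ` E"
  define f' where "f' e' = f (inv_into V g ` e')" for e'
  have EP: "E \<subseteq> Pow V"
  proof
    fix e assume "e \<in> E"
    then obtain u w where "u \<in> V" "w \<in> V" "e = {u, w}" using sg unfolding gsg_def by blast
    then show "e \<in> Pow V" by simp
  qed
  have injG: "inj_on G (Pow V)" unfolding G_def using inj by (rule inj_on_image_Pow)
  have ff: "f' (G e) = f e" if "e \<in> E" for e
    unfolding f'_def G_def using inv_into_image_cancel[OF inj] EP that by auto
  have mem: "g v \<in> G e \<longleftrightarrow> v \<in> e" if "v \<in> V" "e \<in> E" for v e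
    unfolding G_def using inj_on_image_mem_iff[OF inj] EP that by blast
  have cimg: "card {e'\<in>E'. Q e'} = card {e\<in>E. Q (G e)}" for Q
    unfolding E'_def by (rule card_img_filter[OF injG EP])
  have sg': "simple_graph V' E'"
    unfolding simple_graph_def
  proof (intro conjI ballI)
    show "finite V'" using sg unfolding V'_def gsg_def by auto
    fix e' assume "e' \<in> E'"
    then obtain e where e: "e \<in> E" "e' = G e" unfolding E'_def by auto
    then obtain u w where uw: "u \<noteq> w" "u \<in> V" "w \<in> V" "e = {u, w}" using sg unfolding gsg_def by blast
    have "g u \<noteq> g w" using uw inj by (meson inj_on_contraD)
    then show "\<exists>u v. u \<noteq> v \<and> u \<in> V' \<and> v \<in> V' \<and> e' = {u, v}"
      using e uw unfolding V'_def G_def by auto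
  qed
  have nbeq: "closed_nbhd E' (g v) = G (gcn E v)" if v: "v \<in> V" for v
  proof -
    have "{u'. {u', g v} \<in> E'} = g ` {u. {u, v} \<in> E}"
    proof (rule set_eqI, rule iffI)
      fix u' assume "u' \<in> {u'. {u', g v} \<in> E'}"
      then obtain e where e: "e \<in> E" "{u', g v} = G e" unfolding E'_def by auto
      then obtain x y where xy: "x \<noteq> y" "x \<in> V" "y \<in> V" "e = {x, y}" using sg unfolding gsg_def by blast
      have ge: "G e = {g x, g y}" unfolding G_def xy by simp
      have "g v \<in> G e" using e by auto
      then have "v = x \<or> v = y" using ge inj v xy by (auto dest: inj_onD)
      then show "u' \<in> g ` {u. {u, v} \<in> E}"
      proof
        assume "v = x"
        then have "u' = g y" using e ge xy by (metis doubleton_eq_iff)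
        then show ?thesis using e xy \<open>v = x\<close> by (auto simp: insert_commute)
      next
        assume "v = y"
        then have "u' = g x" using e ge xy by (metis doubleton_eq_iff)
        then show ?thesis using e xy \<open>v = y\<close> by auto
      qed
    next
      fix u' assume "u' \<in> g ` {u. {u, v} \<in> E}"
      then obtain u where "{u, v} \<in> E" "u' = g u" by auto
      then show "u' \<in> {u'. {u', g v} \<in> E'}" unfolding E'_def G_def by (auto intro: image_eqI[where x="{u,v}"])
    qed
    then show ?thesis unfolding closed_nbhd_def gcn_def G_def by simp
  qed
  have gcnV: "gcn E v \<subseteq> V" if "v \<in> V" for v
    using that EP unfolding gcn_def by auto
  have flip: "flip_graph k a V' E'"
    unfolding flip_graph_def
  proof (intro conjI)
    show "incr_pos_seq k a" by fact
    show "simple_graph V' E'" by fact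
    show "V' \<noteq> {}" using ne unfolding V'_def by simp
    show "regular V' E' (\<Sum>j = 1..k. a j)" unfolding regular_def
    proof
      fix v' assume "v' \<in> V'"
      then obtain v where v: "v \<in> V" "v' = g v" unfolding V'_def by auto
      have "degree E' v' = card {e\<in>E. g v \<in> G e}" unfolding degree_def v(2) by (rule cimg)
      also have "\<dots> = card {e\<in>E. v \<in> e}" using mem v(1) by (intro arg_cong[where f=card]) auto
      finally show "degree E' v' = (\<Sum>j = 1..k. a j)" using dg v by simp
    qed
    show "\<exists>f. (\<forall>e\<in>E'. f e \<in> {1..k}) \<and> (\<forall>v\<in>V'. \<forall>j\<in>{1..k}. col_deg E' f j v = a j) \<and>
          (\<forall>v\<in>V'. \<forall>j\<in>{1..<k}. col_nbhd_edges E' f (Suc j) v < col_nbhd_edges E' f j v)"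
    proof (intro exI[of _ f'] conjI ballI)
      fix e' assume "e' \<in> E'"
      then show "f' e' \<in> {1..k}" unfolding E'_def using ff fE by auto
    next
      fix v' j assume v': "v' \<in> V'" and j: "j \<in> {1..k}"
      then obtain v where v: "v \<in> V" "v' = g v" unfolding V'_def by auto
      have "col_deg E' f' j v' = card {e\<in>E. g v \<in> G e \<and> f' (G e) = j}" unfolding col_deg_def v(2) by (rule cimg)
      also have "\<dots> = gdg E f j v" unfolding gdg_def using mem v(1) ff by (intro arg_cong[where f=card]) auto
      finally show "col_deg E' f' j v' = a j" using cd v j by simp
    next
      fix v' j assume v': "v' \<in> V'" and j: "j \<in> {1..<k}"
      then obtain v where v: "v \<in> V" "v' = g v" unfolding V'_def by auto
      have eq: "col_nbhd_edges E' f' i v' = gne E f i v" for i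
      proof -
        have "col_nbhd_edges E' f' i v' = card {e\<in>E. G e \<subseteq> closed_nbhd E' (g v) \<and> f' (G e) = i}"
          unfolding col_nbhd_edges_def v(2) by (rule cimg)
        also have "\<dots> = card {e\<in>E. e \<subseteq> gcn E v \<and> f e = i}"
        proof (intro arg_cong[where f=card] Collect_cong conj_cong refl)
          fix e assume e: "e \<in> E"
          show "(G e \<subseteq> closed_nbhd E' (g v)) = (e \<subseteq> gcn E v)"
          proof
            assume h: "G e \<subseteq> closed_nbhd E' (g v)"
            show "e \<subseteq> gcn E v"
            proof
              fix x assume x: "x \<in> e"
              have xV: "x \<in> V" using x e EP by auto
              have "g x \<in> g ` gcn E v" using h x unfolding nbeq[OF v(1)] G_def by auto
              then show "x \<in> gcn E v" using inj_on_image_mem_iff[OF inj xV gcnV[OF v(1)]] by simp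
            qed
          next
            assume "e \<subseteq> gcn E v"
            then show "G e \<subseteq> closed_nbhd E' (g v)" unfolding nbeq[OF v(1)] G_def by auto
          qed
          show "e \<in> E \<Longrightarrow> (f' (G e) = i) = (f e = i)" using ff by simp
        qed
        finally show ?thesis unfolding gne_def .
      qed
      show "col_nbhd_edges E' f' (Suc j) v' < col_nbhd_edges E' f' j v'"
        unfolding eq using cn v j by auto
    qed
  qed
  then show ?thesis unfolding flip_seq_def by blast
qed




lemma gsplit:
  assumes s: "gsg V E"
  shows "gne E f j v = gdg E f j v + card {e\<in>E. e \<subseteq> {u. {u, v} \<in> E} \<and> f e = j}"
proof -
  have edge: "\<exists>x y. x \<noteq> y \<and> e = {x, y}" if "e \<in> E" for e using s that unfolding gsg_def by blast
  have EP: "E \<subseteq> Pow V"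
  proof
    fix e assume "e \<in> E"
    then obtain u w where "u \<in> V" "w \<in> V" "e = {u, w}" using s unfolding gsg_def by blast
    then show "e \<in> Pow V" by simp
  qed
  have fin: "finite E" using s EP unfolding gsg_def by (meson finite_Pow_iff finite_subset)
  have noloop: "{v} \<notin> E"
  proof
    assume "{v} \<in> E"
    then obtain x y where "x \<noteq> y" "{v} = {x, y}" using edge by blast
    then show False by (metis insert_absorb insert_iff singleton_insert_inj_eq)
  qed
  have vn: "v \<notin> {u. {u, v} \<in> E}" using noloop by auto
  have eq: "{e\<in>E. e \<subseteq> gcn E v \<and> f e = j} =
        {e\<in>E. v \<in> e \<and> f e = j} \<union> {e\<in>E. e \<subseteq> {u. {u, v} \<in> E} \<and> f e = j}"
  proof (rule set_eqI, rule iffI)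
    fix e assume e: "e \<in> {e\<in>E. e \<subseteq> gcn E v \<and> f e = j}"
    show "e \<in> {e\<in>E. v \<in> e \<and> f e = j} \<union> {e\<in>E. e \<subseteq> {u. {u, v} \<in> E} \<and> f e = j}"
    proof (cases "v \<in> e")
      case True then show ?thesis using e by auto
    next
      case False
      have "e \<subseteq> {u. {u, v} \<in> E}" using e False unfolding gcn_def by auto
      then show ?thesis using e by auto
    qed
  next
    fix e assume e: "e \<in> {e\<in>E. v \<in> e \<and> f e = j} \<union> {e\<in>E. e \<subseteq> {u. {u, v} \<in> E} \<and> f e = j}"
    show "e \<in> {e\<in>E. e \<subseteq> gcn E v \<and> f e = j}"
    proof (cases "v \<in> e")
      case True
      have eE: "e \<in> E" using e by auto
      obtain x y where xy: "x \<noteq> y" "e = {x, y}" using edge[OF eE] by blast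
      then have "e \<subseteq> gcn E v" using True eE unfolding gcn_def
        by (auto simp: insert_commute)
      then show ?thesis using e by auto
    next
      case False
      then show ?thesis using e unfolding gcn_def by auto
    qed
  qed
  have disj: "{e\<in>E. v \<in> e \<and> f e = j} \<inter> {e\<in>E. e \<subseteq> {u. {u, v} \<in> E} \<and> f e = j} = {}"
    using vn by auto
  show ?thesis unfolding gne_def gdg_def eq
    by (rule card_Un_disjoint) (use fin disj in auto)
qed

definition sdf :: "'a set \<Rightarrow> 'a set \<Rightarrow> 'a set" where
  "sdf A B = (A - B) \<union> (B - A)"

definition PD :: "'i set set \<Rightarrow> ('i set \<Rightarrow> nat) \<Rightarrow> nat \<Rightarrow> 'i set set set" where
  "PD D col j = {{d1, d2} | d1 d2. d1 \<in> D \<and> d2 \<in> D \<and> sdf d1 d2 \<in> D \<and> col (sdf d1 d2) = j}"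

lemma sdf_inv[simp]: "sdf A (sdf A d) = d" unfolding sdf_def by auto
lemma sdf_self[simp]: "sdf A A = {}" unfolding sdf_def by auto
lemma sdf_comm: "sdf A B = sdf B A" unfolding sdf_def by auto
lemma sdf_empty_iff: "sdf A B = {} \<longleftrightarrow> A = B" unfolding sdf_def by auto
lemma sdf_sdf: "sdf (sdf v d1) (sdf v d2) = sdf d1 d2" unfolding sdf_def by auto
lemma sdf_sub: "A \<subseteq> X \<Longrightarrow> B \<subseteq> X \<Longrightarrow> sdf A B \<subseteq> X" unfolding sdf_def by auto
lemma sdf_UI: "\<Union>{A, B} - \<Inter>{A, B} = sdf A B" unfolding sdf_def by auto
lemma inj_sdf: "inj (sdf v)" by (rule injI) (metis sdf_inv)

lemma cayley:
  fixes X :: "'i::countable set" and D :: "'i set set" and col :: "'i set \<Rightarrow> nat"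
  assumes finX: "finite X" and DX: "D \<subseteq> Pow X" and D0: "{} \<notin> D"
  and inc: "incr_pos_seq k a"
  and colD: "\<forall>d\<in>D. col d \<in> {1..k}"
  and cnt: "\<forall>j\<in>{1..k}. card {d\<in>D. col d = j} = a j"
  and ineq: "\<forall>j\<in>{1..<k}. a (Suc j) + card (PD D col (Suc j)) < a j + card (PD D col j)"
  shows "flip_seq k a"
proof -
  define V where "V = Pow X"
  define E where "E = {{A, sdf A d} | A d. A \<in> Pow X \<and> d \<in> D}"
  define f where "f e = col (\<Union>e - \<Inter>e)" for e
  define g where "g A = set_encode (to_nat ` A)" for A :: "'i set"
  have finD: "finite D" using DX finX by (meson finite_Pow_iff finite_subset)
  have Eiff: "{A, B} \<in> E \<longleftrightarrow> A \<subseteq> X \<and> B \<subseteq> X \<and> sdf A B \<in> D" for A B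
  proof
    assume "{A, B} \<in> E"
    then obtain A' d where h: "{A, B} = {A', sdf A' d}" "A' \<subseteq> X" "d \<in> D" unfolding E_def by auto
    have dX: "d \<subseteq> X" using h DX by auto
    from h(1) have "(A = A' \<and> B = sdf A' d) \<or> (A = sdf A' d \<and> B = A')" by (metis doubleton_eq_iff)
    then show "A \<subseteq> X \<and> B \<subseteq> X \<and> sdf A B \<in> D"
      using h dX sdf_sub[of A' X d] by (auto simp: sdf_comm)
  next
    assume h: "A \<subseteq> X \<and> B \<subseteq> X \<and> sdf A B \<in> D"
    have "{A, B} = {A, sdf A (sdf A B)}" by simp
    then show "{A, B} \<in> E" unfolding E_def using h by blast
  qed
  have Eform: "\<exists>A B. e = {A, B} \<and> A \<noteq> B" if "e \<in> E" for e
  proof -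
    have "\<exists>A d. e = {A, sdf A d} \<and> A \<in> Pow X \<and> d \<in> D" using that unfolding E_def by (simp only: mem_Collect_eq)
    then obtain A d where "e = {A, sdf A d}" "d \<in> D" by blast
    moreover have "A \<noteq> sdf A d"
    proof
      assume h: "A = sdf A d"
      have "sdf A (sdf A d) = d" by (rule sdf_inv)
      then have "sdf A A = d" by (simp only: h[symmetric])
      then have "d = {}" by simp
      then show False using D0 \<open>d \<in> D\<close> by simp
    qed
    ultimately show ?thesis by blast
  qed
  have EformE: "P" if e: "e \<in> E" and H: "\<And>A B. e = {A, B} \<Longrightarrow> A \<noteq> B \<Longrightarrow> P" for e P
  proof -
    from Eform[OF e] obtain A B where "e = {A, B}" "A \<noteq> B" by (elim exE conjE)
    then show P by (rule H)
  qed
  have fAB: "f {A, B} = col (sdf A B)" for A B unfolding f_def sdf_UI ..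
  have sg: "gsg V E" unfolding gsg_def
  proof (intro conjI ballI)
    show "finite V" unfolding V_def using finX by simp
    fix e assume e: "e \<in> E"
    obtain A B where AB: "e = {A, B}" "A \<noteq> B" by (rule EformE[OF e])
    have "{A, B} \<in> E" using e AB by simp
    then have "A \<subseteq> X" "B \<subseteq> X" using Eiff by auto
    then show "\<exists>u v. u \<noteq> v \<and> u \<in> V \<and> v \<in> V \<and> e = {u, v}" using AB unfolding V_def by blast
  qed
  have inj: "inj_on g V" unfolding V_def
  proof (rule inj_onI)
    fix A B assume A: "A \<in> Pow X" and B: "B \<in> Pow X" and eq: "g A = g B"
    have "finite A" "finite B" using A B finX by (auto intro: finite_subset)
    then have "to_nat ` A = to_nat ` B" using eq unfolding g_def by (simp add: set_encode_eq)
    then show "A = B" by (simp add: inj_image_eq_iff)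
  qed
  have edges_at: "{e\<in>E. v \<in> e \<and> P e} = (\<lambda>d. {v, sdf v d}) ` {d\<in>D. P {v, sdf v d}}"
    if v: "v \<in> V" for v P
  proof (rule set_eqI, rule iffI)
    fix e assume e: "e \<in> {e\<in>E. v \<in> e \<and> P e}"
    then have "e \<in> E" by simp
    then obtain A B where AB: "e = {A, B}" "A \<noteq> B" by (rule EformE)
    have "v \<in> e" "P e" using e by simp_all
    then have "v = A \<or> v = B" using AB by simp
    then obtain w where w: "e = {v, w}" using AB by (metis insert_commute)
    have "{v, w} \<in> E" using \<open>e \<in> E\<close> w by simp
    then have sD: "sdf v w \<in> D" using Eiff by blast
    have "e = {v, sdf v (sdf v w)}" using w by simp
    moreover have "P {v, sdf v (sdf v w)}" using \<open>P e\<close> w by simp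
    ultimately show "e \<in> (\<lambda>d. {v, sdf v d}) ` {d\<in>D. P {v, sdf v d}}" using sD by blast
  next
    fix e assume "e \<in> (\<lambda>d. {v, sdf v d}) ` {d\<in>D. P {v, sdf v d}}"
    then obtain d where d: "d \<in> D" "P {v, sdf v d}" "e = {v, sdf v d}" by auto
    have "v \<subseteq> X" using v V_def by auto
    moreover have "sdf v d \<subseteq> X" using d DX \<open>v \<subseteq> X\<close> sdf_sub by blast
    ultimately have "{v, sdf v d} \<in> E" using Eiff d by simp
    then show "e \<in> {e\<in>E. v \<in> e \<and> P e}" using d by auto
  qed
  have inj_at: "inj_on (\<lambda>d. {v, sdf v d}) D" for v
  proof (rule inj_onI)
    fix d d' assume d: "d \<in> D" "d' \<in> D" and eq: "{v, sdf v d} = {v, sdf v d'}"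
    have ne: "sdf v x \<noteq> v" if "x \<in> D" for x
    proof
      assume h: "sdf v x = v"
      have "sdf v (sdf v x) = x" by (rule sdf_inv)
      then have "sdf v v = x" by (simp only: h)
      then have "x = {}" by simp
      then show False using D0 that by simp
    qed
    have "sdf v d \<noteq> v" "sdf v d' \<noteq> v" using ne d by auto
    then have "sdf v d = sdf v d'" using eq by (metis doubleton_eq_iff)
    then have "sdf v (sdf v d) = sdf v (sdf v d')" by simp
    then show "d = d'" by (simp only: sdf_inv)
  qed
  have gdg_eq: "gdg E f j v = card {d\<in>D. col d = j}" if v: "v \<in> V" for v j
  proof -
    have "gdg E f j v = card ((\<lambda>d. {v, sdf v d}) ` {d\<in>D. f {v, sdf v d} = j})"
      unfolding gdg_def using edges_at[OF v, of "\<lambda>e. f e = j"] by simp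
    also have "\<dots> = card {d\<in>D. f {v, sdf v d} = j}"
      by (rule card_image) (rule inj_on_subset[OF inj_at], auto)
    finally show ?thesis unfolding fAB by simp
  qed
  have cardD: "card D = (\<Sum>j=1..k. a j)"
  proof -
    have "(\<Sum>j=1..k. card {d\<in>D. col d = j}) = card (\<Union>j\<in>{1..k}. {d\<in>D. col d = j})"
      by (rule card_UN_disjoint[symmetric]) (use finD in auto)
    also have "(\<Union>j\<in>{1..k}. {d\<in>D. col d = j}) = D" using colD by auto
    finally show ?thesis using cnt by simp
  qed
  have deg: "card {e\<in>E. v \<in> e} = (\<Sum>j=1..k. a j)" if v: "v \<in> V" for v
  proof -
    have "card {e\<in>E. v \<in> e} = card ((\<lambda>d. {v, sdf v d}) ` {d\<in>D. True})"
      using edges_at[OF v, of "\<lambda>e. True"] by simp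
    also have "\<dots> = card D" using card_image[OF inj_at] by simp
    finally show ?thesis using cardD by simp
  qed
  have nbv: "{u. {u, v} \<in> E} = sdf v ` D" if v: "v \<in> V" for v
  proof (rule set_eqI, rule iffI)
    fix u assume "u \<in> {u. {u, v} \<in> E}"
    then have "sdf u v \<in> D" using Eiff by auto
    then have "sdf v u \<in> D" by (simp add: sdf_comm)
    moreover have "u = sdf v (sdf v u)" by simp
    ultimately show "u \<in> sdf v ` D" by blast
  next
    fix u assume "u \<in> sdf v ` D"
    then obtain d where d: "d \<in> D" "u = sdf v d" by auto
    have vX: "v \<subseteq> X" using v V_def by auto
    have "u \<subseteq> X" using d DX vX sdf_sub by blast
    moreover have "sdf u v \<in> D"
    proof -
      have "sdf u v = sdf v u" by (rule sdf_comm)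
      also have "\<dots> = d" using d(2) by simp
      finally show ?thesis using d(1) by simp
    qed
    ultimately show "u \<in> {u. {u, v} \<in> E}" using Eiff vX by auto
  qed
  have inner: "{e\<in>E. e \<subseteq> {u. {u, v} \<in> E} \<and> f e = j} = image (sdf v) ` PD D col j"
    if v: "v \<in> V" for v j
  proof (rule set_eqI, rule iffI)
    fix e assume e: "e \<in> {e\<in>E. e \<subseteq> {u. {u, v} \<in> E} \<and> f e = j}"
    then have "e \<in> E" by simp
    then obtain A B where AB: "e = {A, B}" "A \<noteq> B" by (rule EformE)
    have "A \<in> sdf v ` D" "B \<in> sdf v ` D" using e AB nbv[OF v] by auto
    then obtain d1 d2 where d: "d1 \<in> D" "d2 \<in> D" "A = sdf v d1" "B = sdf v d2" by auto
    have "sdf A B \<in> D" using e AB Eiff by auto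
    have sAB: "sdf A B = sdf d1 d2" using d by (simp add: sdf_sdf)
    then have s12: "sdf d1 d2 \<in> D" using \<open>sdf A B \<in> D\<close> by simp
    have "f e = j" using e by simp
    then have "col (sdf d1 d2) = j" using AB fAB sAB by simp
    then have "{d1, d2} \<in> PD D col j" unfolding PD_def using d s12 by blast
    moreover have "e = sdf v ` {d1, d2}" using AB d by auto
    ultimately show "e \<in> image (sdf v) ` PD D col j" by blast
  next
    fix e assume "e \<in> image (sdf v) ` PD D col j"
    then obtain d1 d2 where d: "d1 \<in> D" "d2 \<in> D" "sdf d1 d2 \<in> D" "col (sdf d1 d2) = j"
      "e = {sdf v d1, sdf v d2}" unfolding PD_def by auto
    have vX: "v \<subseteq> X" using v V_def by auto
    have X1: "sdf v d1 \<subseteq> X" "sdf v d2 \<subseteq> X" using d DX vX sdf_sub by blast+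
    have "{sdf v d1, sdf v d2} \<in> E" unfolding Eiff sdf_sdf using X1 d by simp
    then have "e \<in> E" using d by simp
    moreover have "e \<subseteq> {u. {u, v} \<in> E}" using d nbv[OF v] by auto
    moreover have "f e = j" using d by (simp add: fAB sdf_sdf)
    ultimately show "e \<in> {e\<in>E. e \<subseteq> {u. {u, v} \<in> E} \<and> f e = j}" by blast
  qed
  have gne_eq: "gne E f j v = card {d\<in>D. col d = j} + card (PD D col j)" if v: "v \<in> V" for v j
  proof -
    have "inj_on (image (sdf v)) (PD D col j)"
      using inj_on_image_Pow[OF inj_sdf[of v]] by (auto intro: inj_on_subset)
    then have "card (image (sdf v) ` PD D col j) = card (PD D col j)" by (rule card_image)
    then show ?thesis using gsplit[OF sg, of f j v] gdg_eq[OF v] inner[OF v] by simp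
  qed
  show ?thesis
  proof (rule flip_transfer[OF sg _ inj inc])
    show "V \<noteq> {}" unfolding V_def by auto
    show "\<forall>v\<in>V. card {e \<in> E. v \<in> e} = (\<Sum>j = 1..k. a j)" using deg by blast
    show "\<forall>e\<in>E. f e \<in> {1..k}"
    proof
      fix e assume e: "e \<in> E"
      then obtain A B where "e = {A, B}" "A \<noteq> B" by (rule EformE)
      then show "f e \<in> {1..k}" using e Eiff colD fAB by auto
    qed
    show "\<forall>v\<in>V. \<forall>j\<in>{1..k}. gdg E f j v = a j" using gdg_eq cnt by simp
    show "\<forall>v\<in>V. \<forall>j\<in>{1..<k}. gne E f (Suc j) v < gne E f j v"
      using gne_eq cnt ineq by auto
  qed
qed




type_synonym idx = "nat \<times> nat \<times> nat \<times> nat"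

definition Par :: idx where "Par = (0,0,0,0)"
definition Ui :: "nat \<Rightarrow> nat \<Rightarrow> idx" where "Ui j t = (1,j,t,0)"
definition Bi :: "nat \<times> nat \<times> nat \<Rightarrow> idx" where "Bi b = (2, fst b, fst (snd b), snd (snd b))"
definition blk :: "nat \<times> nat \<times> nat \<Rightarrow> idx set \<Rightarrow> idx set" where
  "blk b I = insert Par (insert (Bi b) I)"
definition Wt :: "nat \<Rightarrow> idx set" where "Wt j = (if j = 0 then {} else Ui j ` {..<3})"
definition Us :: "idx set" where "Us = {x. fst x = 1}"
definition colf :: "idx set \<Rightarrow> nat" where
  "colf d = (if Par \<in> d then (THE c. \<exists>j l. (2,j,c,l) \<in> d) else (THE j. \<exists>t. (1,j,t,0) \<in> d))"

lemma Ui_inj[simp]: "Ui j t = Ui j' t' \<longleftrightarrow> j = j' \<and> t = t'" by (simp add: Ui_def)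
lemma Bi_inj[simp]: "Bi b = Bi b' \<longleftrightarrow> b = b'" by (auto simp: Bi_def prod_eq_iff)
lemma Par_Ui[simp]: "Par \<noteq> Ui j t" "Ui j t \<noteq> Par" by (simp_all add: Par_def Ui_def)
lemma Par_Bi[simp]: "Par \<noteq> Bi b" "Bi b \<noteq> Par" by (simp_all add: Par_def Bi_def)
lemma Ui_Bi[simp]: "Ui j t \<noteq> Bi b" "Bi b \<noteq> Ui j t" by (simp_all add: Ui_def Bi_def)
lemma Par_Us[simp]: "Par \<notin> Us" by (simp add: Par_def Us_def)
lemma Bi_Us[simp]: "Bi b \<notin> Us" by (simp add: Bi_def Us_def)
lemma Ui_Us[simp]: "Ui j t \<in> Us" by (simp add: Ui_def Us_def)
lemma Wt_Us: "Wt j \<subseteq> Us" by (auto simp: Wt_def)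
lemma Wt_card: "j \<noteq> 0 \<Longrightarrow> card (Wt j) = 3"
  by (simp add: Wt_def card_image inj_on_def)
lemma Wt0[simp]: "Wt 0 = {}" by (simp add: Wt_def)
lemma fin_Wt[simp]: "finite (Wt j)" by (simp add: Wt_def)
lemma Ui_in_Wt: "Ui j t \<in> Wt i \<longleftrightarrow> i \<noteq> 0 \<and> j = i \<and> t < 3" by (auto simp: Wt_def)

lemma col_single: "colf {Ui j t} = j"
  by (simp add: colf_def Ui_def Par_def)

lemma col_blk: "I \<subseteq> Us \<Longrightarrow> colf (blk b I) = fst (snd b)"
proof -
  assume I: "I \<subseteq> Us"
  have "(\<exists>j l. (2,j,c,l) \<in> blk b I) \<longleftrightarrow> c = fst (snd b)" for c
  proof
    assume "\<exists>j l. (2,j,c,l) \<in> blk b I"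
    then obtain j l where h: "(2,j,c,l) \<in> blk b I" by blast
    have "(2,j,c,l) \<notin> I" using I unfolding Us_def by auto
    moreover have "(2,j,c,l) \<noteq> Par" by (simp add: Par_def)
    ultimately have "(2,j,c,l) = Bi b" using h by (simp add: blk_def)
    then show "c = fst (snd b)" by (cases b) (simp add: Bi_def)
  next
    assume "c = fst (snd b)"
    then show "\<exists>j l. (2,j,c,l) \<in> blk b I" by (cases b) (auto simp: blk_def Bi_def)
  qed
  then show ?thesis by (simp add: colf_def blk_def)
qed

lemma blk_inj:
  assumes "I \<subseteq> Us" "I' \<subseteq> Us" "blk b I = blk b' I'"
  shows "b = b' \<and> I = I'"
proof -
  have "Bi b \<in> blk b I" unfolding blk_def by simp
  hence "Bi b \<in> blk b' I'" unfolding assms(3) .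
  moreover have "Bi b \<notin> I'" using assms(2) Bi_Us by blast
  ultimately have "Bi b = Par \<or> Bi b = Bi b' \<or> Bi b \<in> I'" unfolding blk_def by (simp only: insert_iff)
  then have bb: "b = b'" using \<open>Bi b \<notin> I'\<close> by simp
  have "I = blk b I - {Par, Bi b}" using assms(1) Par_Us Bi_Us by (auto simp: blk_def)
  also have "\<dots> = blk b' I' - {Par, Bi b'}" using assms(3) bb by simp
  also have "\<dots> = I'" using assms(2) Par_Us Bi_Us by (auto simp: blk_def)
  finally show ?thesis using bb by simp
qed

lemma Par_blk[simp]: "Par \<in> blk b I" by (simp add: blk_def)

lemma sdf_blk_same: "I \<subseteq> Us \<Longrightarrow> I' \<subseteq> Us \<Longrightarrow> sdf (blk b I) (blk b I') = sdf I I'"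
  unfolding sdf_def blk_def using Par_Us Bi_Us by blast

lemma sdf_blk_diff: "I \<subseteq> Us \<Longrightarrow> I' \<subseteq> Us \<Longrightarrow> b \<noteq> b' \<Longrightarrow> Bi b \<in> sdf (blk b I) (blk b' I')"
  unfolding sdf_def blk_def using Bi_Us by auto

lemma sdf_single_blk: "u \<in> Us \<Longrightarrow> I \<subseteq> Us \<Longrightarrow> sdf {u} (blk b I) = blk b (sdf {u} I)"
  unfolding sdf_def blk_def using Par_Us Bi_Us by blast

lemma sdf_single_single: "sdf {x} {y} = (if x = y then {} else {x, y})"
  unfolding sdf_def by auto

lemma sdf_eq_single:
  assumes "sdf I1 I2 = {u}"
  shows "(u \<notin> I1 \<and> I2 = insert u I1) \<or> (u \<notin> I2 \<and> I1 = insert u I2)"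
proof -
  have "u \<in> I1 - I2 \<or> u \<in> I2 - I1" using assms unfolding sdf_def by blast
  moreover have h2: "x \<in> I1 \<longleftrightarrow> x \<in> I2" if "x \<noteq> u" for x
    using assms that unfolding sdf_def by blast
  ultimately show ?thesis
  proof (elim disjE)
    assume u: "u \<in> I1 - I2"
    have "I1 = insert u I2"
    proof (rule set_eqI)
      fix x show "x \<in> I1 \<longleftrightarrow> x \<in> insert u I2" by (cases "x = u") (use u h2 in auto)
    qed
    then show ?thesis using u by blast
  next
    assume u: "u \<in> I2 - I1"
    have "I2 = insert u I1"
    proof (rule set_eqI)
      fix x show "x \<in> I2 \<longleftrightarrow> x \<in> insert u I1" by (cases "x = u") (use u h2 in auto)
    qed
    then show ?thesis using u by blast
  qed
qed

locale cons =
  fixes q k P :: nat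
  assumes qk: "q < k"
begin

definition bet :: "nat \<Rightarrow> nat \<Rightarrow> nat" where "bet j c = P + (q - j) + (k - c)"
definition sng :: "nat \<Rightarrow> nat" where "sng c = (8*q+1)*(c - q)"
definition Blk :: "(nat \<times> nat \<times> nat) set" where
  "Blk = {(j,c,l). q < c \<and> c \<le> k \<and> ((1 \<le> j \<and> j \<le> q \<and> l < bet j c) \<or> (j = 0 \<and> l < sng c))}"
definition Sset :: "idx set set" where
  "Sset = (\<lambda>(b, I). blk b I) ` (SIGMA b:Blk. Pow (Wt (fst b)))"
definition Rset :: "idx set set" where
  "Rset = (\<lambda>(j,t). {Ui j t}) ` (SIGMA j:{1..q}. {..<j+3})"

lemma S_mem: "d \<in> Sset \<longleftrightarrow> (\<exists>b I. b \<in> Blk \<and> I \<subseteq> Wt (fst b) \<and> d = blk b I)"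
  unfolding Sset_def by force
lemma R_mem: "d \<in> Rset \<longleftrightarrow> (\<exists>j t. 1 \<le> j \<and> j \<le> q \<and> t < j + 3 \<and> d = {Ui j t})"
  unfolding Rset_def by force
definition Dset :: "idx set set" where "Dset = Rset \<union> Sset"

lemma fin_Blk: "finite Blk"
proof -
  have "Blk \<subseteq> {..q} \<times> {..k} \<times> {..<P+q+k+(8*q+1)*k}"
  proof
    fix b assume "b \<in> Blk"
    then obtain j c l where b: "b = (j,c,l)" "q < c" "c \<le> k" "(1 \<le> j \<and> j \<le> q \<and> l < bet j c) \<or> (j = 0 \<and> l < sng c)"
      unfolding Blk_def by auto
    have "bet j c \<le> P+q+k" unfolding bet_def by simp
    moreover have "sng c \<le> (8*q+1)*k" unfolding sng_def using b by (intro mult_le_mono2) simp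
    ultimately show "b \<in> {..q} \<times> {..k} \<times> {..<P+q+k+(8*q+1)*k}" using b by auto
  qed
  then show ?thesis by (rule finite_subset) simp
qed

lemma fin_D: "finite Dset"
proof -
  have "finite Sset" unfolding Sset_def using fin_Blk by simp
  moreover have "finite Rset" unfolding Rset_def by simp
  ultimately show ?thesis unfolding Dset_def by simp
qed

lemma D0: "{} \<notin> Dset" unfolding Dset_def by (auto simp: R_mem S_mem blk_def)

lemma R_col: "d \<in> Rset \<Longrightarrow> 1 \<le> colf d \<and> colf d \<le> q"
  unfolding R_mem by (auto simp: col_single)

lemma S_col: "d \<in> Sset \<Longrightarrow> q < colf d \<and> colf d \<le> k"
proof -
  assume "d \<in> Sset"
  then obtain b I where bI: "b \<in> Blk" "I \<subseteq> Wt (fst b)" "d = blk b I" unfolding S_mem by blast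
  have "colf d = fst (snd b)" using bI col_blk Wt_Us by blast
  then show ?thesis using bI(1) unfolding Blk_def by auto
qed

lemma D_col: "d \<in> Dset \<Longrightarrow> colf d \<in> {1..k}"
proof -
  assume "d \<in> Dset"
  then have "d \<in> Rset \<or> d \<in> Sset" by (simp add: Dset_def)
  then show ?thesis
  proof
    assume "d \<in> Rset" then show ?thesis using R_col[of d] qk by simp
  next
    assume "d \<in> Sset" then show ?thesis using S_col[of d] by simp
  qed
qed


definition Blkc :: "nat \<Rightarrow> (nat \<times> nat \<times> nat) set" where "Blkc c = {b\<in>Blk. fst (snd b) = c}"
definition Blkt :: "nat \<Rightarrow> (nat \<times> nat \<times> nat) set" where "Blkt i = {b\<in>Blk. fst b = i}"

lemma Blkc_eq:
  assumes c: "q < c" "c \<le> k"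
  shows "Blkc c = (\<lambda>(j,l). (j,c,l)) ` (SIGMA j:{1..q}. {..<bet j c}) \<union> (\<lambda>l. (0,c,l)) ` {..<sng c}"
  unfolding Blkc_def Blk_def using c by force

lemma Blkt_eq:
  assumes i: "1 \<le> i" "i \<le> q"
  shows "Blkt i = (\<lambda>(c,l). (i,c,l)) ` (SIGMA c:{q+1..k}. {..<bet i c})"
  unfolding Blkt_def Blk_def using i by force

lemma sum_Blkc:
  assumes c: "q < c" "c \<le> k"
  shows "(\<Sum>b\<in>Blkc c. h (fst b)) = (\<Sum>j=1..q. bet j c * h j) + sng c * h 0"
proof -
  let ?A = "(\<lambda>(j,l). (j,c,l)) ` (SIGMA j:{1..q}. {..<bet j c})"
  let ?B = "(\<lambda>l. (0::nat,c,l)) ` {..<sng c}"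
  have dis: "?A \<inter> ?B = {}" by auto
  have injA: "inj_on (\<lambda>(j,l). (j,c,l)) (SIGMA j:{1..q}. {..<bet j c})" by (auto simp: inj_on_def)
  have injB: "inj_on (\<lambda>l. (0::nat,c,l)) {..<sng c}" by (auto simp: inj_on_def)
  have "(\<Sum>b\<in>?A. h (fst b)) = (\<Sum>p\<in>(SIGMA j:{1..q}. {..<bet j c}). h (fst p))"
    by (subst sum.reindex[OF injA]) (simp add: case_prod_beta)
  also have "\<dots> = (\<Sum>(j,l)\<in>(SIGMA j:{1..q}. {..<bet j c}). h j)" by (simp add: case_prod_beta)
  also have "\<dots> = (\<Sum>j=1..q. \<Sum>l<bet j c. h j)" by (rule sum.Sigma[symmetric]) auto
  also have "\<dots> = (\<Sum>j=1..q. bet j c * h j)" by simp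
  finally have sA: "(\<Sum>b\<in>?A. h (fst b)) = (\<Sum>j=1..q. bet j c * h j)" .
  have sB: "(\<Sum>b\<in>?B. h (fst b)) = sng c * h 0"
    by (subst sum.reindex[OF injB]) simp
  show ?thesis unfolding Blkc_eq[OF c] using sum.union_disjoint[OF _ _ dis, of "\<lambda>b. h (fst b)"] sA sB by simp
qed

lemma card_Blkt:
  assumes i: "1 \<le> i" "i \<le> q"
  shows "card (Blkt i) = (\<Sum>c=q+1..k. bet i c)"
proof -
  have inj: "inj_on (\<lambda>(c,l). (i,c,l)) (SIGMA c:{q+1..k}. {..<bet i c})" by (auto simp: inj_on_def)
  show ?thesis unfolding Blkt_eq[OF i] card_image[OF inj] by (simp add: card_SigmaI)
qed

lemma fin_Blkc: "finite (Blkc c)" unfolding Blkc_def using fin_Blk by simp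
lemma fin_Blkt: "finite (Blkt i)" unfolding Blkt_def using fin_Blk by simp

lemma cnt_small:
  assumes i: "1 \<le> i" "i \<le> q"
  shows "card {d\<in>Dset. colf d = i} = i + 3"
proof -
  have "{d\<in>Dset. colf d = i} = (\<lambda>t. {Ui i t}) ` {..<i+3}"
  proof (rule set_eqI, rule iffI)
    fix d assume d: "d \<in> {d\<in>Dset. colf d = i}"
    have "d \<notin> Sset" using d S_col i by fastforce
    then have "d \<in> Rset" using d Dset_def by auto
    then obtain j t where jt: "t < j + 3" "d = {Ui j t}" unfolding R_mem by blast
    then have "j = i" using d col_single by auto
    then show "d \<in> (\<lambda>t. {Ui i t}) ` {..<i+3}" using jt by auto
  next
    fix d assume "d \<in> (\<lambda>t. {Ui i t}) ` {..<i+3}"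
    then obtain t where "t < i + 3" "d = {Ui i t}" by auto
    then show "d \<in> {d\<in>Dset. colf d = i}" using i unfolding Dset_def by (auto simp: col_single R_mem)
  qed
  moreover have "inj_on (\<lambda>t. {Ui i t}) {..<i+3}" by (auto simp: inj_on_def)
  ultimately show ?thesis by (simp add: card_image)
qed

lemma cnt_big:
  assumes c: "q < c" "c \<le> k"
  shows "card {d\<in>Dset. colf d = c} = 8 * (\<Sum>j=1..q. bet j c) + sng c"
proof -
  let ?T = "SIGMA b:Blkc c. Pow (Wt (fst b))"
  have eq: "{d\<in>Dset. colf d = c} = (\<lambda>(b,I). blk b I) ` ?T"
  proof (rule set_eqI, rule iffI)
    fix d assume d: "d \<in> {d\<in>Dset. colf d = c}"
    have "d \<notin> Rset" using d R_col c by fastforce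
    then have "d \<in> Sset" using d Dset_def by auto
    then obtain b I where bI: "b \<in> Blk" "I \<subseteq> Wt (fst b)" "d = blk b I" unfolding S_mem by blast
    have "colf d = fst (snd b)" using bI col_blk Wt_Us by blast
    then have "b \<in> Blkc c" using d bI unfolding Blkc_def by auto
    then show "d \<in> (\<lambda>(b,I). blk b I) ` ?T" using bI by auto
  next
    fix d assume "d \<in> (\<lambda>(b,I). blk b I) ` ?T"
    then obtain b I where bI: "b \<in> Blkc c" "I \<subseteq> Wt (fst b)" "d = blk b I" by auto
    have "colf d = fst (snd b)" using bI col_blk Wt_Us by blast
    moreover have "b \<in> Blk" "fst (snd b) = c" using bI(1) unfolding Blkc_def by auto
    moreover have "d \<in> Sset" unfolding S_mem using bI(2,3) \<open>b \<in> Blk\<close> by blast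
    ultimately show "d \<in> {d\<in>Dset. colf d = c}" unfolding Dset_def by auto
  qed
  have inj: "inj_on (\<lambda>(b,I). blk b I) ?T"
  proof (rule inj_onI)
    fix x y assume x: "x \<in> ?T" and y: "y \<in> ?T" and e: "(\<lambda>(b,I). blk b I) x = (\<lambda>(b,I). blk b I) y"
    obtain b I where xb: "x = (b, I)" by fastforce
    obtain b' I' where yb: "y = (b', I')" by fastforce
    have "I \<subseteq> Us" "I' \<subseteq> Us" using x y xb yb Wt_Us by auto
    then show "x = y" using blk_inj e xb yb by auto
  qed
  have "card ?T = (\<Sum>b\<in>Blkc c. 2 ^ card (Wt (fst b)))"
    using fin_Blkc by (simp add: card_SigmaI card_Pow)
  also have "\<dots> = (\<Sum>j=1..q. bet j c * 2 ^ card (Wt j)) + sng c * 2 ^ card (Wt 0)"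
    by (rule sum_Blkc[OF c])
  also have "(\<Sum>j=1..q. bet j c * 2 ^ card (Wt j)) = (\<Sum>j=1..q. bet j c * 8)"
    by (rule sum.cong) (auto simp: Wt_card)
  also have "(\<Sum>j=1..q. bet j c * 8) = 8 * (\<Sum>j=1..q. bet j c)" by (simp add: sum_distrib_left mult.commute)
  finally have "card ?T = 8 * (\<Sum>j=1..q. bet j c) + sng c" by simp
  then show ?thesis unfolding eq card_image[OF inj] .
qed
end




lemma PD_mem: "x \<in> PD D col j \<longleftrightarrow> (\<exists>d1 d2. x = {d1, d2} \<and> d1 \<in> D \<and> d2 \<in> D \<and> sdf d1 d2 \<in> D \<and> col (sdf d1 d2) = j)"
  unfolding PD_def by blast

context cons begin

lemma R_form: assumes "d \<in> Rset" shows "\<exists>u. d = {u} \<and> u \<in> Us"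
proof -
  obtain j t where "d = {Ui j t}" using assms unfolding R_mem by blast
  then show ?thesis using Ui_Us by blast
qed

lemma S_form: "d \<in> Sset \<Longrightarrow> \<exists>b I. d = blk b I \<and> b \<in> Blk \<and> I \<subseteq> Wt (fst b)"
  unfolding S_mem by auto

lemma PD_small:
  assumes i: "1 \<le> i" "i \<le> q"
  shows "card (PD Dset colf i) = 12 * (\<Sum>c=q+1..k. bet i c)"
proof -
  let ?T = "SIGMA b:Blkt i. SIGMA t:{..<3::nat}. Pow (Wt i - {Ui i t})"
  let ?F = "\<lambda>(b, t, I). {blk b I, blk b (insert (Ui i t) I)}"
  have eq: "PD Dset colf i = ?F ` ?T"
  proof (rule set_eqI, rule iffI)
    fix x assume "x \<in> PD Dset colf i"
    then obtain d1 d2 where x: "x = {d1, d2}" "d1 \<in> Dset" "d2 \<in> Dset" "sdf d1 d2 \<in> Dset"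
      "colf (sdf d1 d2) = i" unfolding PD_mem by blast
    have "sdf d1 d2 \<notin> Sset" using x S_col i by fastforce
    then have "sdf d1 d2 \<in> Rset" using x Dset_def by auto
    then obtain j t where jt: "t < j + 3" "sdf d1 d2 = {Ui j t}" unfolding R_mem by blast
    then have ji: "j = i" using x col_single by metis
    have d1: "d1 \<in> Rset \<or> d1 \<in> Sset" and d2: "d2 \<in> Rset \<or> d2 \<in> Sset" using x Dset_def by auto
    have ParR: "Par \<notin> d" if "d \<in> Rset" for d using that R_form Par_Us by fastforce
    have ParS: "Par \<in> d" if "d \<in> Sset" for d using that S_form by fastforce
    have Pnot: "Par \<notin> sdf d1 d2" using jt by simp
    have S1: "d1 \<in> Sset"
    proof (rule ccontr)
      assume n: "d1 \<notin> Sset"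
      then have r1: "d1 \<in> Rset" using d1 by auto
      show False
      proof (cases "d2 \<in> Sset")
        case True
        then have "Par \<in> sdf d1 d2" using ParS ParR r1 unfolding sdf_def by blast
        then show False using Pnot by simp
      next
        case False
        then have "d2 \<in> Rset" using d2 by auto
        then obtain u2 where "d2 = {u2}" using R_form by blast
        moreover obtain u1 where "d1 = {u1}" using R_form r1 by blast
        ultimately have "sdf d1 d2 = (if u1 = u2 then {} else {u1, u2})" by (simp add: sdf_single_single)
        then show False using jt by (auto split: if_splits simp: doubleton_eq_iff)
      qed
    qed
    have S2: "d2 \<in> Sset"
    proof (rule ccontr)
      assume "d2 \<notin> Sset"
      then have "d2 \<in> Rset" using d2 by auto
      then have "Par \<in> sdf d1 d2" using ParS[OF S1] ParR unfolding sdf_def by blast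
      then show False using Pnot by simp
    qed
    obtain b1 I1 where b1: "d1 = blk b1 I1" "b1 \<in> Blk" "I1 \<subseteq> Wt (fst b1)" using S_form[OF S1] by blast
    obtain b2 I2 where b2: "d2 = blk b2 I2" "b2 \<in> Blk" "I2 \<subseteq> Wt (fst b2)" using S_form[OF S2] by blast
    have U1: "I1 \<subseteq> Us" and U2: "I2 \<subseteq> Us" using b1 b2 Wt_Us by blast+
    have bb: "b1 = b2"
    proof (rule ccontr)
      assume "b1 \<noteq> b2"
      then have "Bi b1 \<in> sdf d1 d2" using sdf_blk_diff[OF U1 U2] b1 b2 by simp
      then show False using jt by simp
    qed
    have sI: "sdf I1 I2 = {Ui i t}" using jt ji b1 b2 bb sdf_blk_same[OF U1 U2] by simp
    then have "Ui i t \<in> I1 \<union> I2" unfolding sdf_def by blast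
    then have "Ui i t \<in> Wt (fst b1)" using b1 b2 bb by blast
    then have fb: "fst b1 = i" "t < 3" using Ui_in_Wt by auto
    have bT: "b1 \<in> Blkt i" using fb b1 unfolding Blkt_def by auto
    from sdf_eq_single[OF sI] show "x \<in> ?F ` ?T"
    proof
      assume h: "Ui i t \<notin> I1 \<and> I2 = insert (Ui i t) I1"
      have "(b1, t, I1) \<in> ?T" using bT fb h b1 by auto
      moreover have "x = ?F (b1, t, I1)" using x b1 b2 bb h by simp
      ultimately show ?thesis by blast
    next
      assume h: "Ui i t \<notin> I2 \<and> I1 = insert (Ui i t) I2"
      have "(b1, t, I2) \<in> ?T" using bT fb h b2 bb by auto
      moreover have "x = ?F (b1, t, I2)" using x b1 b2 bb h by (simp add: insert_commute)
      ultimately show ?thesis by blast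
    qed
  next
    fix x assume "x \<in> ?F ` ?T"
    then obtain b t I where bt: "b \<in> Blkt i" "t < 3" "I \<subseteq> Wt i - {Ui i t}"
      "x = {blk b I, blk b (insert (Ui i t) I)}" by auto
    have b: "b \<in> Blk" "fst b = i" using bt unfolding Blkt_def by auto
    have uW: "Ui i t \<in> Wt i" using bt i Ui_in_Wt by auto
    have IU: "I \<subseteq> Us" "insert (Ui i t) I \<subseteq> Us" using bt uW Wt_Us by blast+
    have "I \<subseteq> Wt (fst b)" "insert (Ui i t) I \<subseteq> Wt (fst b)" using b bt uW by auto
    then have "blk b I \<in> Sset" "blk b (insert (Ui i t) I) \<in> Sset" unfolding S_mem using b by blast+
    then have d1: "blk b I \<in> Dset" and d2: "blk b (insert (Ui i t) I) \<in> Dset" unfolding Dset_def by auto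
    have "sdf (blk b I) (blk b (insert (Ui i t) I)) = sdf I (insert (Ui i t) I)"
      by (rule sdf_blk_same[OF IU])
    also have "\<dots> = {Ui i t}" using bt unfolding sdf_def by auto
    finally have s: "sdf (blk b I) (blk b (insert (Ui i t) I)) = {Ui i t}" .
    have "{Ui i t} \<in> Dset" unfolding Dset_def using i bt by (auto simp: R_mem)
    then show "x \<in> PD Dset colf i" unfolding PD_mem using bt d1 d2 s col_single by metis
  qed
  have inj: "inj_on ?F ?T"
  proof (rule inj_onI)
    fix x y assume x: "x \<in> ?T" and y: "y \<in> ?T" and e: "?F x = ?F y"
    obtain b t I where xb: "x = (b, t, I)" by (metis prod_cases3)
    obtain b' t' I' where yb: "y = (b', t', I')" by (metis prod_cases3)
    have I: "I \<subseteq> Us" "insert (Ui i t) I \<subseteq> Us" "Ui i t \<notin> I" using x xb Wt_Us Ui_Us by auto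
    have I': "I' \<subseteq> Us" "insert (Ui i t') I' \<subseteq> Us" "Ui i t' \<notin> I'" using y yb Wt_Us Ui_Us by auto
    have e': "{blk b I, blk b (insert (Ui i t) I)} = {blk b' I', blk b' (insert (Ui i t') I')}"
      using e xb yb by simp
    then have "(blk b I = blk b' I' \<and> blk b (insert (Ui i t) I) = blk b' (insert (Ui i t') I')) \<or>
               (blk b I = blk b' (insert (Ui i t') I') \<and> blk b (insert (Ui i t) I) = blk b' I')"
      by (simp add: doubleton_eq_iff)
    then show "x = y"
    proof
      assume h: "blk b I = blk b' I' \<and> blk b (insert (Ui i t) I) = blk b' (insert (Ui i t') I')"
      have 1: "b = b' \<and> I = I'" using blk_inj[OF I(1) I'(1)] h by blast
      have "insert (Ui i t) I = insert (Ui i t') I'" using blk_inj[OF I(2) I'(2)] h by blast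
      then have "Ui i t \<in> insert (Ui i t') I" using 1 by (metis insertI1)
      then have "Ui i t = Ui i t'" using I(3) by blast
      then have "t = t'" by simp
      then show ?thesis using 1 xb yb by simp
    next
      assume h: "blk b I = blk b' (insert (Ui i t') I') \<and> blk b (insert (Ui i t) I) = blk b' I'"
      have "I = insert (Ui i t') I'" using blk_inj[OF I(1) I'(2)] h by blast
      moreover have "insert (Ui i t) I = I'" using blk_inj[OF I(2) I'(1)] h by blast
      ultimately show ?thesis using I'(3) by auto
    qed
  qed
  have "card ?T = (\<Sum>b\<in>Blkt i. \<Sum>t<3. 2 ^ card (Wt i - {Ui i t}))"
    using fin_Blkt by (simp add: card_SigmaI card_Pow)
  also have "\<dots> = (\<Sum>b\<in>Blkt i. 12)"
  proof (rule sum.cong[OF refl])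
    fix b
    have "card (Wt i - {Ui i t}) = 2" if "t < 3" for t
      using Wt_card[of i] i that Ui_in_Wt by (simp add: card_Diff_singleton)
    then show "(\<Sum>t<3. 2 ^ card (Wt i - {Ui i t})) = (12::nat)" by (simp add: numeral_3_eq_3)
  qed
  also have "\<dots> = 12 * card (Blkt i)" by simp
  finally show ?thesis unfolding eq card_image[OF inj] card_Blkt[OF i] .
qed


lemma Blk_type: "b \<in> Blk \<Longrightarrow> fst b \<noteq> 0 \<Longrightarrow> 1 \<le> fst b \<and> fst b \<le> q"
  unfolding Blk_def by auto

lemma PD_big:
  assumes c: "q < c" "c \<le> k"
  shows "card (PD Dset colf c) = 24 * (\<Sum>j=1..q. bet j c)"
proof -
  let ?T = "SIGMA b:Blkc c. Wt (fst b) \<times> Pow (Wt (fst b))"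
  let ?F = "\<lambda>(b, u, I). {{u}, blk b I}"
  have ParR: "Par \<notin> d" if "d \<in> Rset" for d using that R_form Par_Us by fastforce
  have ParS: "Par \<in> d" if "d \<in> Sset" for d using that S_form by fastforce
  have helper: "{d1, d2} \<in> ?F ` ?T" if r: "d1 \<in> Rset" and sS: "d2 \<in> Sset" and s: "sdf d1 d2 \<in> Sset"
    and cc: "colf (sdf d1 d2) = c" for d1 d2
  proof -
    obtain u where u: "d1 = {u}" "u \<in> Us" using R_form[OF r] by blast
    obtain b I where bI: "d2 = blk b I" "b \<in> Blk" "I \<subseteq> Wt (fst b)" using S_form[OF sS] by blast
    obtain b' J where bJ: "sdf d1 d2 = blk b' J" "b' \<in> Blk" "J \<subseteq> Wt (fst b')" using S_form[OF s] by blast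
    have IU: "I \<subseteq> Us" using bI Wt_Us by blast
    have sU: "sdf {u} I \<subseteq> Us" using u IU unfolding sdf_def by blast
    have "sdf d1 d2 = blk b (sdf {u} I)" using u bI sdf_single_blk[OF u(2) IU] by simp
    then have "blk b (sdf {u} I) = blk b' J" using bJ by simp
    moreover have JU: "J \<subseteq> Us" using bJ(3) Wt_Us by blast
    ultimately have bb: "b = b'" "sdf {u} I = J" using blk_inj[OF sU JU] by auto
    have "u \<in> I \<union> sdf {u} I" unfolding sdf_def by blast
    moreover have "I \<union> sdf {u} I \<subseteq> Wt (fst b)" using bI(3) bb bJ(3) by auto
    ultimately have uW: "u \<in> Wt (fst b)" by blast
    have "colf (sdf d1 d2) = fst (snd b')" unfolding bJ(1) by (rule col_blk[OF JU])
    then have "colf (sdf d1 d2) = fst (snd b)" using bb by simp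
    then have "b \<in> Blkc c" using cc bI unfolding Blkc_def by auto
    then have "(b, u, I) \<in> ?T" using uW bI by auto
    moreover have "{d1, d2} = ?F (b, u, I)" using u bI by simp
    ultimately show ?thesis by blast
  qed
  have eq: "PD Dset colf c = ?F ` ?T"
  proof (rule set_eqI, rule iffI)
    fix x assume "x \<in> PD Dset colf c"
    then obtain d1 d2 where x: "x = {d1, d2}" "d1 \<in> Dset" "d2 \<in> Dset" "sdf d1 d2 \<in> Dset"
      "colf (sdf d1 d2) = c" unfolding PD_mem by blast
    have "sdf d1 d2 \<notin> Rset" using x R_col c by fastforce
    then have sS: "sdf d1 d2 \<in> Sset" using x Dset_def by auto
    have Pin: "Par \<in> sdf d1 d2" using ParS[OF sS] .
    have d1: "d1 \<in> Rset \<or> d1 \<in> Sset" and d2: "d2 \<in> Rset \<or> d2 \<in> Sset" using x Dset_def by auto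
    show "x \<in> ?F ` ?T"
    proof (cases "d1 \<in> Sset")
      case True
      then have "Par \<in> d1" using ParS by blast
      then have "Par \<notin> d2" using Pin unfolding sdf_def by blast
      then have "d2 \<notin> Sset" using ParS by blast
      then have r2: "d2 \<in> Rset" using d2 by blast
      have "sdf d2 d1 \<in> Sset" "colf (sdf d2 d1) = c" using sS x sdf_comm by metis+
      then have "{d2, d1} \<in> ?F ` ?T" using helper[OF r2 True] by blast
      then show ?thesis using x by (simp add: insert_commute)
    next
      case False
      then have r1: "d1 \<in> Rset" using d1 by blast
      then have "Par \<notin> d1" using ParR by blast
      then have "Par \<in> d2" using Pin unfolding sdf_def by blast
      then have "d2 \<notin> Rset" using ParR by blast
      then have s2: "d2 \<in> Sset" using d2 by blast
      show ?thesis using helper[OF r1 s2 sS] x by simp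
    qed
  next
    fix x assume "x \<in> ?F ` ?T"
    then obtain b u I where bt: "b \<in> Blkc c" "u \<in> Wt (fst b)" "I \<subseteq> Wt (fst b)"
      "x = {{u}, blk b I}" by auto
    have b: "b \<in> Blk" "fst (snd b) = c" using bt unfolding Blkc_def by auto
    have nz: "fst b \<noteq> 0"
    proof
      assume "fst b = 0"
      then show False using bt(2) by simp
    qed
    then have jq: "1 \<le> fst b" "fst b \<le> q" using Blk_type b by auto
    obtain t where t: "u = Ui (fst b) t" "t < 3" using bt nz unfolding Wt_def by auto
    have "{u} \<in> Rset" unfolding R_mem using jq t by auto
    then have d1: "{u} \<in> Dset" unfolding Dset_def by simp
    have "blk b I \<in> Sset" unfolding S_mem using b bt by blast
    then have d2: "blk b I \<in> Dset" unfolding Dset_def by simp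
    have IU: "I \<subseteq> Us" using bt Wt_Us by blast
    have uU: "u \<in> Us" using t by simp
    have s: "sdf {u} (blk b I) = blk b (sdf {u} I)" by (rule sdf_single_blk[OF uU IU])
    have sW: "sdf {u} I \<subseteq> Wt (fst b)" using bt unfolding sdf_def by blast
    then have "blk b (sdf {u} I) \<in> Sset" unfolding S_mem using b by blast
    then have sD: "sdf {u} (blk b I) \<in> Dset" unfolding Dset_def s by simp
    have "colf (sdf {u} (blk b I)) = c" unfolding s using col_blk sW Wt_Us b by (metis subset_trans)
    then show "x \<in> PD Dset colf c" unfolding PD_mem using bt d1 d2 sD by blast
  qed
  have inj: "inj_on ?F ?T"
  proof (rule inj_onI)
    fix x y assume x: "x \<in> ?T" and y: "y \<in> ?T" and e: "?F x = ?F y"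
    obtain b u I where xb: "x = (b, u, I)" by (metis prod_cases3)
    obtain b' u' I' where yb: "y = (b', u', I')" by (metis prod_cases3)
    have I: "I \<subseteq> Us" "u \<in> Us" using x xb Wt_Us by auto
    have I': "I' \<subseteq> Us" using y yb Wt_Us by auto
    have "{{u}, blk b I} = {{u'}, blk b' I'}" using e xb yb by simp
    then have "({u} = {u'} \<and> blk b I = blk b' I') \<or> ({u} = blk b' I' \<and> blk b I = {u'})"
      by (simp add: doubleton_eq_iff)
    then show "x = y"
    proof
      assume h: "{u} = {u'} \<and> blk b I = blk b' I'"
      then have "b = b' \<and> I = I'" using blk_inj[OF I(1) I'] by blast
      moreover have "u = u'" using h by simp
      ultimately show ?thesis using xb yb by simp
    next
      assume h: "{u} = blk b' I' \<and> blk b I = {u'}"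
      then have "Par \<in> {u}" by simp
      then show ?thesis using I(2) by simp
    qed
  qed
  have "card ?T = (\<Sum>b\<in>Blkc c. card (Wt (fst b)) * 2 ^ card (Wt (fst b)))"
    using fin_Blkc by (simp add: card_SigmaI card_Pow card_cartesian_product)
  also have "\<dots> = (\<Sum>j=1..q. bet j c * (card (Wt j) * 2 ^ card (Wt j))) + sng c * (card (Wt 0) * 2 ^ card (Wt 0))"
    by (rule sum_Blkc[OF c])
  also have "(\<Sum>j=1..q. bet j c * (card (Wt j) * 2 ^ card (Wt j))) = (\<Sum>j=1..q. bet j c * 24)"
    by (rule sum.cong) (auto simp: Wt_card)
  also have "(\<Sum>j=1..q. bet j c * 24) = 24 * (\<Sum>j=1..q. bet j c)" by (simp add: sum_distrib_left mult.commute)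
  finally show ?thesis unfolding eq card_image[OF inj] by simp
qed
end



context cons begin

lemma n_step:
  assumes "c < k"
  shows "(\<Sum>j=1..q. bet j c) = (\<Sum>j=1..q. bet j (Suc c)) + q"
proof -
  have "(\<Sum>j=1..q. bet j c) = (\<Sum>j=1..q. bet j (Suc c) + 1)"
    by (rule sum.cong) (use assms in \<open>auto simp: bet_def\<close>)
  also have "\<dots> = (\<Sum>j=1..q. bet j (Suc c)) + (\<Sum>j=1..q. (1::nat))" by (simp only: sum.distrib)
  finally show ?thesis by simp
qed

lemma B_step:
  assumes "j < q"
  shows "(\<Sum>c=q+1..k. bet j c) = (\<Sum>c=q+1..k. bet (Suc j) c) + (k - q)"
proof -
  have "(\<Sum>c=q+1..k. bet j c) = (\<Sum>c=q+1..k. bet (Suc j) c + 1)"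
    by (rule sum.cong) (use assms in \<open>auto simp: bet_def\<close>)
  also have "\<dots> = (\<Sum>c=q+1..k. bet (Suc j) c) + (\<Sum>c=q+1..k. (1::nat))" by (simp only: sum.distrib)
  finally show ?thesis by simp
qed

lemma n_upper: "(\<Sum>j=1..q. bet j c) \<le> q * (P + q + k)"
proof -
  have "(\<Sum>j=1..q. bet j c) \<le> (\<Sum>j=1..q. P + q + k)"
    by (rule sum_mono) (auto simp: bet_def)
  then show ?thesis by simp
qed

lemma B_lower: "(k - q) * P \<le> (\<Sum>c=q+1..k. bet j c)"
proof -
  have "(\<Sum>c=q+1..k. P) \<le> (\<Sum>c=q+1..k. bet j c)"
    by (rule sum_mono) (auto simp: bet_def)
  then show ?thesis by simp
qed

lemma sng_step: "q < c \<Longrightarrow> sng (Suc c) = sng c + (8*q+1)"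
proof -
  assume "q < c"
  then have "Suc c - q = Suc (c - q)" by simp
  then show ?thesis unfolding sng_def by simp
qed

lemma sng_first: "sng (Suc q) = 8*q+1"
  unfolding sng_def by simp

end

lemma lower:
  assumes q1: "1 \<le> q" and qk3: "11*q < 3*k"
  shows "admissible k q"
proof -
  have qk: "q < k" using q1 qk3 by linarith
  have main: "\<exists>a. flip_seq k a \<and> a q = q + 3 \<and> a k > N" for N
  proof -
    define P where "P = 32*q*(q+k) + 8*q + N + 1"
    interpret cons q k P by unfold_locales (rule qk)
    define a where "a i = card {d\<in>Dset. colf d = i}" for i
    define n where "n c = (\<Sum>j=1..q. bet j c)" for c
    define B where "B j = (\<Sum>c=q+1..k. bet j c)" for j
    have as: "a i = i + 3" "card (PD Dset colf i) = 12 * B i" if "1 \<le> i" "i \<le> q" for i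
      unfolding a_def B_def using cnt_small[OF that] PD_small[OF that] by auto
    have ab: "a c = 8 * n c + sng c" "card (PD Dset colf c) = 24 * n c" if "q < c" "c \<le> k" for c
      unfolding a_def n_def using cnt_big[OF that] PD_big[OF that] by auto
    have finX: "finite (\<Union>Dset)"
    proof (rule finite_Union[OF fin_D])
      fix d assume "d \<in> Dset"
      then have "d \<in> Rset \<or> d \<in> Sset" unfolding Dset_def by simp
      then show "finite d"
      proof
        assume "d \<in> Rset" then show ?thesis using R_form by auto
      next
        assume "d \<in> Sset"
        then obtain b I where "d = blk b I" "I \<subseteq> Wt (fst b)" using S_form by blast
        then show ?thesis by (auto simp: blk_def intro: finite_subset)
      qed
    qed
    have 12: "32 * q + 1 \<le> 12 * (k - q)" using qk3 by linarith
    have inc: "incr_pos_seq k a" unfolding incr_pos_seq_def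
    proof (intro conjI ballI)
      fix j assume j: "j \<in> {1..k}"
      show "0 < a j"
      proof (cases "j \<le> q")
        case True then show ?thesis using as j by auto
      next
        case False
        then have "a j = 8 * n j + sng j" using ab j by auto
        moreover have "0 < sng j" using False unfolding sng_def by simp
        ultimately show ?thesis by simp
      qed
    next
      fix j assume j: "j \<in> {1..<k}"
      show "a j < a (Suc j)"
      proof (cases "j < q")
        case True then show ?thesis using as j by auto
      next
        case False
        show ?thesis
        proof (cases "j = q")
          case True
          then have "a (Suc j) = 8 * n (Suc q) + (8*q+1)" using ab[of "Suc q"] qk sng_first by simp
          then show ?thesis using as[of q] q1 True by simp
        next
          case False
          then have jq: "q < j" using \<open>\<not> j < q\<close> by simp
          have "n j = n (Suc j) + q" unfolding n_def using n_step j by simp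
          moreover have "sng (Suc j) = sng j + (8*q+1)" using sng_step jq by simp
          moreover have "a j = 8 * n j + sng j" "a (Suc j) = 8 * n (Suc j) + sng (Suc j)"
            using ab jq j by auto
          ultimately show ?thesis by simp
        qed
      qed
    qed
    have ineq: "\<forall>j\<in>{1..<k}. a (Suc j) + card (PD Dset colf (Suc j)) < a j + card (PD Dset colf j)"
    proof
      fix j assume j: "j \<in> {1..<k}"
      show "a (Suc j) + card (PD Dset colf (Suc j)) < a j + card (PD Dset colf j)"
      proof (cases "j < q")
        case True
        have "B j = B (Suc j) + (k - q)" unfolding B_def using B_step True by simp
        moreover have "k - q \<ge> 1" using qk by simp
        ultimately show ?thesis using as[of j] as[of "Suc j"] True j by auto
      next
        case False
        show ?thesis
        proof (cases "j = q")
          case True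
          have e1: "a (Suc q) + card (PD Dset colf (Suc q)) = 32 * n (Suc q) + (8*q+1)"
            using ab[of "Suc q"] qk sng_first by simp
          have e2: "a q + card (PD Dset colf q) = q + 3 + 12 * B q" using as[of q] q1 by simp
          have n1: "n (Suc q) \<le> q * (P + q + k)" unfolding n_def by (rule n_upper)
          have b1: "(k - q) * P \<le> B q" unfolding B_def by (rule B_lower)
          have "(32 * q + 1) * P \<le> 12 * (k - q) * P" using 12 by (rule mult_right_mono) simp
          then have "12 * ((k - q) * P) \<ge> (32 * q + 1) * P" by (simp add: mult.assoc)
          then have "12 * B q \<ge> 32 * q * P + P" using b1 by (simp add: algebra_simps)
          moreover have "32 * n (Suc q) \<le> 32 * q * P + 32 * q * (q + k)" using n1 by (simp add: algebra_simps)
          ultimately have "32 * n (Suc q) + (8*q+1) < q + 3 + 12 * B q" unfolding P_def by linarith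
          then show ?thesis using e1 e2 True by simp
        next
          case False
          then have jq: "q < j" using \<open>\<not> j < q\<close> by simp
          have "n j = n (Suc j) + q" unfolding n_def using n_step j by simp
          moreover have "sng (Suc j) = sng j + (8*q+1)" using sng_step jq by simp
          moreover have "a j = 8 * n j + sng j" "a (Suc j) = 8 * n (Suc j) + sng (Suc j)"
            "card (PD Dset colf j) = 24 * n j" "card (PD Dset colf (Suc j)) = 24 * n (Suc j)"
            using ab jq j by auto
          ultimately show ?thesis using q1 by simp
        qed
      qed
    qed
    have fs: "flip_seq k a"
    proof (rule cayley[OF finX _ D0 inc])
      show "Dset \<subseteq> Pow (\<Union>Dset)" by auto
      show "\<forall>d\<in>Dset. colf d \<in> {1..k}" using D_col by blast
      show "\<forall>j\<in>{1..k}. card {d \<in> Dset. colf d = j} = a j" unfolding a_def by simp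
      show "\<forall>j\<in>{1..<k}. a (Suc j) + card (PD Dset colf (Suc j)) < a j + card (PD Dset colf j)" by (rule ineq)
    qed
    have aq: "a q = q + 3" using as q1 by simp
    have "bet 1 k \<le> n k" unfolding n_def by (rule member_le_sum) (use q1 in auto)
    moreover have "P \<le> bet 1 k" unfolding bet_def by simp
    moreover have "a k = 8 * n k + sng k" using ab qk by simp
    ultimately have "a k > N" unfolding P_def by linarith
    then show ?thesis using fs aq by blast
  qed
  show ?thesis unfolding admissible_def using q1 qk main by (intro conjI exI[of _ "q+3"]) auto
qed


theorem theorem4p1:
  fixes k :: nat
  assumes "k > 3"
  shows "{q. admissible k q} \<noteq> {} \<and>
         max 1 (\<lceil>real k / 4\<rceil> - 1) \<le> int (q_max k) \<and>
         (if k mod 3 = 0 then real (q_max k) < real k / 3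
          else int (q_max k) < \<lceil>real k / 2\<rceil>)"
proof -
  define q0 where "q0 = max 1 ((k - 1) div 4)"
  have q0a: "admissible k q0" using assms unfolding q0_def by (intro lower) auto
  have fin: "finite {q. admissible k q}"
    by (rule finite_subset[of _ "{..k}"]) (auto simp: admissible_def)
  have q0le: "q0 \<le> q_max k" unfolding q_max_def using fin q0a by (simp add: Max_ge)
  have qa: "admissible k (q_max k)" unfolding q_max_def
    using fin q0a by (metis (mono_tags) Max_in empty_iff mem_Collect_eq)
  have up: "3 * q_max k < k" using upper[OF qa] .
  have c1: "\<lceil>real k / 4\<rceil> - 1 \<le> int ((k - 1) div 4)"
  proof -
    have "real k / 4 \<le> real ((k - 1) div 4) + 1" using assms by linarith
    hence "\<lceil>real k / 4\<rceil> \<le> int ((k - 1) div 4) + 1"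
      by (metis ceiling_le_iff of_int_1 of_int_add of_int_of_nat_eq)
    thus ?thesis by linarith
  qed
  have c2: "max 1 (\<lceil>real k / 4\<rceil> - 1) \<le> int q0" unfolding q0_def using c1 by auto
  have c3: "real (q_max k) < real k / 3" using up by linarith
  have c4: "int (q_max k) < \<lceil>real k / 2\<rceil>"
  proof -
    have "real (q_max k) < real k / 2" using up by linarith
    also have "\<dots> \<le> of_int \<lceil>real k / 2\<rceil>" by (rule le_of_int_ceiling)
    finally show ?thesis by linarith
  qed
  show ?thesis using q0a c2 q0le c3 c4 by auto
qed
end
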